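(* Let $A$ be a left counital bialgebra and let $\mu_T:\mathbf{k}\to Ш(A)$, $c\mapsto c1_A$. Then $(Ш(A),\diamond,\mu_T,\Delta_T,\varepsilon_T,P_r)$ is a left counital cocycle bialgebra; that is: $(Ш(A),\diamond,\mu_T)$ is a commutative unital algebra on which $P_r$ is a Nijenhuis operator; $\Delta_T$ and $\varepsilon_T$ are algebra homomorphisms; $\Delta_T$ is coassociative; $(\varepsilon_T\otimes\mathrm{id})\Delta_T=\beta_\ell$ (where $\beta_\ell(\mathfrak a)=1\otimes\mathfrak a$); and the one-cocycle property $\Delta_TP_r=(\mathrm{id}\otimes P_r)\Delta_T$ holds.
   Context: Throughout, $\mathbf{k}$ is a commutative unital ring, all algebras are unital commutative $\mathbf{k}$-algebras, tensor products are over $\mathbf{k}$. A left counital bialgebra $(H,m,\mu,\Delta,\varepsilon)$ is an algebra $H$ with algebra homomorphisms $\Delta:H\to H\otimes H$ (coassociative) and $\varepsilon:H\to\mathbf{k}$ satisfying left counicity $(\varepsilon\otimes\mathrm{id})\Delta=\beta_\ell$, where $\beta_\ell(u)=1\otimes u$; right counicity is not required. A Nijenhuis operator on an algebra $R$ is a linear $P:R\to R$ with $P(x)P(y)=P(P(x)y)+P(xP(y))-P^2(xy)$. For an algebra $A$ with unit $1_A$, $Ш(A)=\bigoplus_{n\ge1}A^{\otimes n}$, $P_r(\mathfrak a)=1_A\otimes\mathfrak a$, and the product $\diamond$ is defined bilinearly on pure tensors $\mathfrak a=a_1\otimes\mathfrak a'\in A^{\otimes m}$, $\mathfrak b=b_1\otimes\mathfrak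 b'\in A^{\otimes n}$ by: $a_1b_1$ if $m=n=1$; $a_1b_1\otimes\mathfrak b'$ if $m=1,n\ge2$; $a_1b_1\otimes\mathfrak a'$ if $m\ge2,n=1$; $a_1b_1\otimes\big(\mathfrak a'\diamond(1_A\otimes\mathfrak b')+(1_A\otimes\mathfrak a')\diamond\mathfrak b'-1_A\otimes(\mathfrak a'\diamond\mathfrak b')\big)$ if $m,n\ge2$. $Ш(A)\otimes Ш(A)$ has the product $\bullet$, $(x\otimes y)\bullet(x'\otimes y')=(x\diamond x')\otimes(y\diamond y')$, and $A\otimes A\subseteq Ш(A)\otimes Ш(A)$ via $A=A^{\otimes1}$. When $A$ is a left counital bialgebra with coproduct $\Delta_A$ and counit $\varepsilon_A$: the linear map $\Delta_T:Ш(A)\to Ш(A)\otimes Ш(A)$ is defined on pure tensors by induction on tensor length: $\Delta_T(a)=\Delta_A(a)$ for $a\in A$, and for $\mathfrak a'\in A^{\otimes n}$, $\Delta_T(1_A\otimes\mathfrak a')=(\mathrm{id}\otimes P_r)\Delta_T(\mathfrak a')$ and $\Delta_T(a_1\otimes\mathfrak a')=\Delta_A(a_1)\bullet(\mathrm{id}\otimes P_r)\Delta_T(\mathfrak a')$; and $\varepsilon_T:Ш(A)\to\mathbf{k}$ is the linear map $\varepsilon_T(a_1\otimes\cdots\otimes a_n)=\varepsilon_A(a_1)\cdots\varepsilon_A(a_n)$. *)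

theory Defs
  imports Main "HOL-Library.Poly_Mapping"
begin

text \<open>
Tensor products: every module occurring (Sha(A), Sha(A) (x) Sha(A), Sha(A)^(x)3, A (x) A, ...)
is a direct sum of tensor products of tensor powers of A, hence a quotient of the free
k-module on "block tuples" of elements of A (type 'a list list: a list of blocks, each
block a word a_1 (x) ... (x) a_n).
The quotient is by the submodule nullT sc generated by multilinearity relations in every
slot of every block.
An element of Sha(A) is represented by a combination of one-block tuples [w], w nonempty;
Sha(A) (x) Sha(A) by two-block tuples [u,v]; A (x) A by [[x],[y]]; and so on.
\<close>

definition smul :: "'k::comm_ring_1 \<Rightarrow> ('i \<Rightarrow>\<^sub>0 'k) \<Rightarrow> ('i \<Rightarrow>\<^sub>0 'k)" where
  "smul c p = Poly_Mapping.map (\<lambda>x. c * x) p"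

definition pt :: "'a list list \<Rightarrow> ('a list list \<Rightarrow>\<^sub>0 'k::comm_ring_1)" where
  "pt I = Poly_Mapping.single I 1"

definition lin_ext :: "('i \<Rightarrow> ('j \<Rightarrow>\<^sub>0 'k::comm_ring_1)) \<Rightarrow> ('i \<Rightarrow>\<^sub>0 'k) \<Rightarrow> ('j \<Rightarrow>\<^sub>0 'k)" where
  "lin_ext f p = (\<Sum>i\<in>Poly_Mapping.keys p. smul (Poly_Mapping.lookup p i) (f i))"

definition bilin_ext :: "('i \<Rightarrow> 'j \<Rightarrow> ('l \<Rightarrow>\<^sub>0 'k::comm_ring_1)) \<Rightarrow> ('i \<Rightarrow>\<^sub>0 'k) \<Rightarrow> ('j \<Rightarrow>\<^sub>0 'k) \<Rightarrow> ('l \<Rightarrow>\<^sub>0 'k)" where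
  "bilin_ext g p q = (\<Sum>i\<in>Poly_Mapping.keys p. \<Sum>j\<in>Poly_Mapping.keys q. smul (Poly_Mapping.lookup p i * Poly_Mapping.lookup q j) (g i j))"

inductive nullT :: "('k::comm_ring_1 \<Rightarrow> 'a::comm_ring_1 \<Rightarrow> 'a) \<Rightarrow> ('a list list \<Rightarrow>\<^sub>0 'k) \<Rightarrow> bool"
  for sc where
  null_zero: "nullT sc 0"
| null_add_rel: "nullT sc (pt (Bs @ [u @ [a + b] @ v] @ Cs) - pt (Bs @ [u @ [a] @ v] @ Cs)
                           - pt (Bs @ [u @ [b] @ v] @ Cs))"
| null_smul_rel: "nullT sc (pt (Bs @ [u @ [sc c a] @ v] @ Cs) - smul c (pt (Bs @ [u @ [a] @ v] @ Cs)))"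
| null_add: "nullT sc p \<Longrightarrow> nullT sc q \<Longrightarrow> nullT sc (p + q)"
| null_smul: "nullT sc p \<Longrightarrow> nullT sc (smul c p)"

definition teq :: "('k::comm_ring_1 \<Rightarrow> 'a::comm_ring_1 \<Rightarrow> 'a) \<Rightarrow> ('a list list \<Rightarrow>\<^sub>0 'k) \<Rightarrow> ('a list list \<Rightarrow>\<^sub>0 'k) \<Rightarrow> bool" where
  "teq sc p q \<longleftrightarrow> nullT sc (p - q)"

definition k_algebra :: "('k::comm_ring_1 \<Rightarrow> 'a::comm_ring_1 \<Rightarrow> 'a) \<Rightarrow> bool" where
  "k_algebra sc \<longleftrightarrow>
     (\<forall>c a b. sc c (a + b) = sc c a + sc c b) \<and>
     (\<forall>c d a. sc (c + d) a = sc c a + sc d a) \<and>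
     (\<forall>c d a. sc (c * d) a = sc c (sc d a)) \<and>
     (\<forall>a. sc 1 a = a) \<and>
     (\<forall>c a b. sc c (a * b) = sc c a * b)"

definition tens :: "('a list list \<Rightarrow>\<^sub>0 'k::comm_ring_1) \<Rightarrow> ('a list list \<Rightarrow>\<^sub>0 'k) \<Rightarrow> ('a list list \<Rightarrow>\<^sub>0 'k)" where
  "tens p q = bilin_ext (\<lambda>I J. pt (I @ J)) p q"

definition prepend :: "'a \<Rightarrow> ('a list list \<Rightarrow>\<^sub>0 'k::comm_ring_1) \<Rightarrow> ('a list list \<Rightarrow>\<^sub>0 'k)" where
  "prepend c = lin_ext (\<lambda>I. case I of [w] \<Rightarrow> pt [c # w] | _ \<Rightarrow> 0)"

definition Pr :: "('a::one list list \<Rightarrow>\<^sub>0 'k::comm_ring_1) \<Rightarrow> ('a list list \<Rightarrow>\<^sub>0 'k)" where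
  "Pr = prepend 1"

text \<open>the product diamond on pure tensors (words); junk value 0 on empty words\<close>
function dw :: "'a::comm_ring_1 list \<Rightarrow> 'a list \<Rightarrow> ('a list list \<Rightarrow>\<^sub>0 'k::comm_ring_1)" where
  "dw [a] [b] = pt [[a * b]]"
| "dw [a] (b # d # v) = pt [(a * b) # d # v]"
| "dw (a # c # u) [b] = pt [(a * b) # c # u]"
| "dw (a # c # u) (b # d # v) =
     prepend (a * b) (dw (c # u) (1 # d # v) + dw (1 # c # u) (d # v) - prepend 1 (dw (c # u) (d # v)))"
| "dw [] v = 0"
| "dw (a # u) [] = 0"
  by pat_completeness auto
termination by (relation "measure (\<lambda>(x, y). length x + length y)") auto

definition diamond :: "('a::comm_ring_1 list list \<Rightarrow>\<^sub>0 'k::comm_ring_1) \<Rightarrow> ('a list list \<Rightarrow>\<^sub>0 'k) \<Rightarrow> ('a list list \<Rightarrow>\<^sub>0 'k)" where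
  "diamond p q = bilin_ext (\<lambda>I J. case (I, J) of ([u], [v]) \<Rightarrow> dw u v | _ \<Rightarrow> 0) p q"

definition muT :: "'k::comm_ring_1 \<Rightarrow> ('a::one list list \<Rightarrow>\<^sub>0 'k)" where
  "muT c = smul c (pt [[1]])"

definition is_sh :: "('a list list \<Rightarrow>\<^sub>0 'k::zero) \<Rightarrow> bool" where
  "is_sh p \<longleftrightarrow> (\<forall>I\<in>Poly_Mapping.keys p. \<exists>w. w \<noteq> [] \<and> I = [w])"

definition is_sh2 :: "('a list list \<Rightarrow>\<^sub>0 'k::zero) \<Rightarrow> bool" where
  "is_sh2 p \<longleftrightarrow> (\<forall>I\<in>Poly_Mapping.keys p. \<exists>u v. u \<noteq> [] \<and> v \<noteq> [] \<and> I = [u, v])"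

text \<open>the product bullet on Sha(A)(x)Sha(A) (restricting to the product of A(x)A)\<close>
definition bullet :: "('a::comm_ring_1 list list \<Rightarrow>\<^sub>0 'k::comm_ring_1) \<Rightarrow> ('a list list \<Rightarrow>\<^sub>0 'k) \<Rightarrow> ('a list list \<Rightarrow>\<^sub>0 'k)" where
  "bullet p q = bilin_ext (\<lambda>I J. case (I, J) of ([u, v], [u', v']) \<Rightarrow> tens (dw u u') (dw v v') | _ \<Rightarrow> 0) p q"

definition id_Pr :: "('a::one list list \<Rightarrow>\<^sub>0 'k::comm_ring_1) \<Rightarrow> ('a list list \<Rightarrow>\<^sub>0 'k)" where
  "id_Pr = lin_ext (\<lambda>I. case I of [u, v] \<Rightarrow> pt [u, 1 # v] | _ \<Rightarrow> 0)"

text \<open>Delta_T on pure tensors (the clause for 1_A (x) a' is the instance a_1 = 1_A of the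
  general clause, since Delta_A(1_A) = 1 (x) 1 is the unit for bullet)\<close>
fun DTw :: "('a::comm_ring_1 \<Rightarrow> ('a list list \<Rightarrow>\<^sub>0 'k::comm_ring_1)) \<Rightarrow> 'a list \<Rightarrow> ('a list list \<Rightarrow>\<^sub>0 'k)" where
  "DTw Delta [] = 0"
| "DTw Delta [a] = Delta a"
| "DTw Delta (a # b # w) = bullet (Delta a) (id_Pr (DTw Delta (b # w)))"

definition DeltaT :: "('a::comm_ring_1 \<Rightarrow> ('a list list \<Rightarrow>\<^sub>0 'k::comm_ring_1)) \<Rightarrow> ('a list list \<Rightarrow>\<^sub>0 'k) \<Rightarrow> ('a list list \<Rightarrow>\<^sub>0 'k)" where
  "DeltaT Delta = lin_ext (\<lambda>I. case I of [w] \<Rightarrow> DTw Delta w | _ \<Rightarrow> 0)"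

definition epsw :: "('a \<Rightarrow> 'k::comm_ring_1) \<Rightarrow> 'a list \<Rightarrow> 'k" where
  "epsw eps w = prod_list (map eps w)"

definition epsT :: "('a \<Rightarrow> 'k::comm_ring_1) \<Rightarrow> ('a list list \<Rightarrow>\<^sub>0 'k) \<Rightarrow> 'k" where
  "epsT eps p = (\<Sum>I\<in>Poly_Mapping.keys p. Poly_Mapping.lookup p I * (case I of [w] \<Rightarrow> epsw eps w | _ \<Rightarrow> 0))"

definition tmap_left :: "('a list \<Rightarrow> ('a list list \<Rightarrow>\<^sub>0 'k::comm_ring_1)) \<Rightarrow> ('a list list \<Rightarrow>\<^sub>0 'k) \<Rightarrow> ('a list list \<Rightarrow>\<^sub>0 'k)" where
  "tmap_left f = lin_ext (\<lambda>I. case I of [u, v] \<Rightarrow> tens (f u) (pt [v]) | _ \<Rightarrow> 0)"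

definition tmap_right :: "('a list \<Rightarrow> ('a list list \<Rightarrow>\<^sub>0 'k::comm_ring_1)) \<Rightarrow> ('a list list \<Rightarrow>\<^sub>0 'k) \<Rightarrow> ('a list list \<Rightarrow>\<^sub>0 'k)" where
  "tmap_right f = lin_ext (\<lambda>I. case I of [u, v] \<Rightarrow> tens (pt [u]) (f v) | _ \<Rightarrow> 0)"

definition counit_left :: "('a list \<Rightarrow> 'k::comm_ring_1) \<Rightarrow> ('a list list \<Rightarrow>\<^sub>0 'k) \<Rightarrow> ('a list list \<Rightarrow>\<^sub>0 'k)" where
  "counit_left e = lin_ext (\<lambda>I. case I of [u, v] \<Rightarrow> smul (e u) (pt [v]) | _ \<Rightarrow> 0)"

definition lift1 :: "('a \<Rightarrow> ('a list list \<Rightarrow>\<^sub>0 'k::zero)) \<Rightarrow> 'a list \<Rightarrow> ('a list list \<Rightarrow>\<^sub>0 'k)" where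
  "lift1 Delta u = (case u of [x] \<Rightarrow> Delta x | _ \<Rightarrow> 0)"

definition lc_bialgebra :: "('k::comm_ring_1 \<Rightarrow> 'a::comm_ring_1 \<Rightarrow> 'a) \<Rightarrow> ('a \<Rightarrow> ('a list list \<Rightarrow>\<^sub>0 'k)) \<Rightarrow> ('a \<Rightarrow> 'k) \<Rightarrow> bool" where
  "lc_bialgebra sc Delta eps \<longleftrightarrow>
     k_algebra sc \<and>
     (\<forall>a. Poly_Mapping.keys (Delta a) \<subseteq> {[[x], [y]] | x y. True}) \<and>
     \<comment> \<open>Delta is a k-algebra homomorphism A -> A (x) A\<close>
     (\<forall>a b. teq sc (Delta (a + b)) (Delta a + Delta b)) \<and>
     (\<forall>c a. teq sc (Delta (sc c a)) (smul c (Delta a))) \<and>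
     (\<forall>a b. teq sc (Delta (a * b)) (bullet (Delta a) (Delta b))) \<and>
     teq sc (Delta 1) (pt [[1], [1]]) \<and>
     \<comment> \<open>coassociativity\<close>
     (\<forall>a. teq sc (tmap_left (lift1 Delta) (Delta a)) (tmap_right (lift1 Delta) (Delta a))) \<and>
     \<comment> \<open>eps is a k-algebra homomorphism A -> k\<close>
     (\<forall>a b. eps (a + b) = eps a + eps b) \<and>
     (\<forall>c a. eps (sc c a) = c * eps a) \<and>
     (\<forall>a b. eps (a * b) = eps a * eps b) \<and>
     eps 1 = 1 \<and>
     \<comment> \<open>left counicity (eps (x) id) Delta = beta_l, with k (x) A = A\<close>
     (\<forall>a. teq sc (counit_left (epsw eps) (Delta a)) (pt [[a]]))"

end

theory Submission
  imports Defs
begin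


section \<open>Free module basics\<close>

lemma lookup_smul[simp]: "Poly_Mapping.lookup (smul c p) i = c * Poly_Mapping.lookup p i"
  unfolding smul_def by transfer (auto simp: when_def)

lemma smul_0[simp]: "smul c 0 = 0"
  by (rule poly_mapping_eqI) simp
lemma smul_zero_left[simp]: "smul 0 p = 0"
  by (rule poly_mapping_eqI) simp
lemma smul_one[simp]: "smul 1 p = p"
  by (rule poly_mapping_eqI) simp
lemma smul_add: "smul c (p + q) = smul c p + smul c q"
  by (rule poly_mapping_eqI) (simp add: lookup_add algebra_simps)
lemma smul_add_left: "smul (c + d) p = smul c p + smul d p"
  by (rule poly_mapping_eqI) (simp add: lookup_add algebra_simps)
lemma smul_smul[simp]: "smul c (smul d p) = smul (c * d) p"
  by (rule poly_mapping_eqI) (simp add: algebra_simps)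
lemma smul_uminus: "smul c (- p) = - smul c p"
  by (rule poly_mapping_eqI) (simp add: algebra_simps)
lemma smul_diff: "smul c (p - q) = smul c p - smul c q"
  by (rule poly_mapping_eqI) (simp add: lookup_minus algebra_simps)
lemma smul_minus_one: "smul (-1) p = - p"
  by (rule poly_mapping_eqI) simp
lemma smul_sum: "smul c (sum f A) = (\<Sum>i\<in>A. smul c (f i))"
  by (induction A rule: infinite_finite_induct) (auto simp: smul_add)

lemma keys_smul: "Poly_Mapping.keys (smul c p) \<subseteq> Poly_Mapping.keys p"
  by (auto simp: in_keys_iff)

lemma keys_pt[simp]: "Poly_Mapping.keys (pt I :: _ \<Rightarrow>\<^sub>0 'k::comm_ring_1) = {I}"
  by (simp add: pt_def)
lemma lookup_pt_self[simp]: "Poly_Mapping.lookup (pt I :: _ \<Rightarrow>\<^sub>0 'k::comm_ring_1) I = 1"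
  by (simp add: pt_def)

lemma lin_ext_0[simp]: "lin_ext f 0 = 0"
  by (simp add: lin_ext_def)

lemma lin_ext_pt[simp]: "lin_ext f (pt I) = f I"
  by (simp add: lin_ext_def)

lemma lin_ext_smul: "lin_ext f (smul c p) = smul c (lin_ext f p)"
proof -
  have "lin_ext f (smul c p) = (\<Sum>i\<in>Poly_Mapping.keys p. smul (c * Poly_Mapping.lookup p i) (f i))"
    unfolding lin_ext_def
    by (rule sum.mono_neutral_cong_left) (auto simp: in_keys_iff)
  then show ?thesis by (simp add: lin_ext_def smul_sum)
qed

lemma lin_ext_add: "lin_ext f (p + q) = lin_ext f p + lin_ext f q"
proof -
  have *: "(\<Sum>i\<in>Poly_Mapping.keys p. smul (Poly_Mapping.lookup p i) (f i))
         = (\<Sum>i\<in>Poly_Mapping.keys p \<union> Poly_Mapping.keys q. smul (Poly_Mapping.lookup p i) (f i))"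
          "(\<Sum>i\<in>Poly_Mapping.keys q. smul (Poly_Mapping.lookup q i) (f i))
         = (\<Sum>i\<in>Poly_Mapping.keys p \<union> Poly_Mapping.keys q. smul (Poly_Mapping.lookup q i) (f i))"
    by (auto simp: in_keys_iff intro: sum.mono_neutral_cong_left)
  have "lin_ext f (p+q) = (\<Sum>i\<in>Poly_Mapping.keys (p + q).
       smul (Poly_Mapping.lookup p i) (f i) + smul (Poly_Mapping.lookup q i) (f i))"
    by (auto simp: lin_ext_def lookup_add smul_add_left)
  also have "... = (\<Sum>i \<in> Poly_Mapping.keys p \<union> Poly_Mapping.keys q. smul (Poly_Mapping.lookup p i) (f i)
                         + smul (Poly_Mapping.lookup q i) (f i))"
  proof (rule sum.mono_neutral_cong_left)
    show "\<forall>i\<in>Poly_Mapping.keys p \<union> Poly_Mapping.keys q - Poly_Mapping.keys (p + q).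
       smul (Poly_Mapping.lookup p i) (f i) + smul (Poly_Mapping.lookup q i) (f i) = 0"
      by (metis DiffD2 smul_add_left smul_zero_left in_keys_iff lookup_add)
  qed (auto simp: keys_add)
  also have "... = lin_ext f p + lin_ext f q"
    by (auto simp: * sum.distrib lin_ext_def)
  finally show ?thesis .
qed

lemma lin_ext_uminus: "lin_ext f (- p) = - lin_ext f p"
  by (metis lin_ext_smul smul_minus_one)
lemma lin_ext_diff: "lin_ext f (p - q) = lin_ext f p - lin_ext f q"
  by (metis add_uminus_conv_diff lin_ext_add lin_ext_uminus)
lemma lin_ext_sum: "lin_ext f (sum g A) = (\<Sum>i\<in>A. lin_ext f (g i))"
  by (induction A rule: infinite_finite_induct) (auto simp: lin_ext_add)

lemma lin_ext_cong: "(\<And>i. i \<in> Poly_Mapping.keys p \<Longrightarrow> f i = g i) \<Longrightarrow> lin_ext f p = lin_ext g p"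
  by (simp add: lin_ext_def)

lemma lin_ext_zero_fun: "(\<And>i. i \<in> Poly_Mapping.keys p \<Longrightarrow> f i = 0) \<Longrightarrow> lin_ext f p = 0"
  by (simp add: lin_ext_def)

lemma keys_lin_ext: "Poly_Mapping.keys (lin_ext f p) \<subseteq> (\<Union>i\<in>Poly_Mapping.keys p. Poly_Mapping.keys (f i))"
proof -
  have "Poly_Mapping.keys (lin_ext f p) \<subseteq> (\<Union>i\<in>Poly_Mapping.keys p. Poly_Mapping.keys (smul (Poly_Mapping.lookup p i) (f i)))"
    unfolding lin_ext_def by (rule keys_sum)
  then show ?thesis using keys_smul by fastforce
qed

lemma lin_ext_expansion: "lin_ext pt p = p"
proof -
  have *: "finite I \<Longrightarrow> Poly_Mapping.lookup (\<Sum>i\<in>I. smul (Poly_Mapping.lookup p i) (pt i)) j =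
            (if j \<in> I then Poly_Mapping.lookup p j else 0)" for I j
    by (induction I rule: finite_induct) (auto simp: lookup_add pt_def lookup_single when_def)
  show ?thesis
    unfolding lin_ext_def
    by (rule poly_mapping_eqI) (fastforce simp add: in_keys_iff *)
qed

lemma lin_induct[consumes 1, case_names zero sing add]:
  assumes supp: "Poly_Mapping.keys p \<subseteq> S"
    and 0: "P 0" and sing: "\<And>x c. x \<in> S \<Longrightarrow> P (smul c (pt x))"
    and add: "\<And>a b. P a \<Longrightarrow> P b \<Longrightarrow> P (a + b)"
  shows "P p"
proof -
  have "P (\<Sum>i\<in>I. smul (Poly_Mapping.lookup p i) (pt i))" if "I \<subseteq> Poly_Mapping.keys p" for I
    using finite_subset [OF that finite_keys [of p]] that
  proof (induction I rule: finite_induct)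
    case empty then show ?case by (simp add: 0)
  next
    case (insert i I)
    then show ?case using supp by (auto intro!: add sing)
  qed
  then have "P (lin_ext pt p)" by (simp add: lin_ext_def)
  then show ?thesis by (simp add: lin_ext_expansion)
qed

lemma lin_ext_compose: "lin_ext f (lin_ext g (p :: 'a list list \<Rightarrow>\<^sub>0 'k::comm_ring_1)) = lin_ext (\<lambda>i. lin_ext f (g i)) p"
  using subset_refl[of "Poly_Mapping.keys p"]
  by (induction p rule: lin_induct) (auto simp: lin_ext_add lin_ext_smul)

lemma lin_ext_fun_add: "lin_ext (\<lambda>i. f i + g i) p = lin_ext f p + lin_ext g p"
  by (simp add: lin_ext_def smul_add sum.distrib)

lemma lin_ext_fun_diff: "lin_ext (\<lambda>i. f i - g i) p = lin_ext f p - lin_ext g p"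
  by (simp add: lin_ext_def smul_diff sum_subtractf)

lemma lin_ext_fun_smul: "lin_ext (\<lambda>i. smul c (f i)) p = smul c (lin_ext f p)"
  by (simp add: lin_ext_def smul_sum mult.commute)

lemma lin_ext_fun_zero[simp]: "lin_ext (\<lambda>i. 0) p = 0"
  by (simp add: lin_ext_zero_fun)

lemma bilin_ext_alt: "bilin_ext g p q = lin_ext (\<lambda>i. lin_ext (g i) q) p"
  unfolding bilin_ext_def lin_ext_def
  by (simp add: smul_sum)

lemma bilin_ext_pt[simp]: "bilin_ext g (pt I) (pt J) = g I J"
  by (simp add: bilin_ext_alt)
lemma bilin_ext_add1: "bilin_ext g (p + p') q = bilin_ext g p q + bilin_ext g p' q"
  by (simp add: bilin_ext_alt lin_ext_add)
lemma bilin_ext_add2: "bilin_ext g p (q + q') = bilin_ext g p q + bilin_ext g p q'"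
  by (simp add: bilin_ext_alt lin_ext_add lin_ext_fun_add)
lemma bilin_ext_diff1: "bilin_ext g (p - p') q = bilin_ext g p q - bilin_ext g p' q"
  by (simp add: bilin_ext_alt lin_ext_diff)
lemma bilin_ext_diff2: "bilin_ext g p (q - q') = bilin_ext g p q - bilin_ext g p q'"
  by (simp add: bilin_ext_alt lin_ext_diff lin_ext_fun_diff)
lemma bilin_ext_smul1: "bilin_ext g (smul c p) q = smul c (bilin_ext g p q)"
  by (simp add: bilin_ext_alt lin_ext_smul)
lemma bilin_ext_smul2: "bilin_ext g p (smul c q) = smul c (bilin_ext g p q)"
  by (simp add: bilin_ext_alt lin_ext_smul lin_ext_fun_smul)
lemma bilin_ext_01[simp]: "bilin_ext g 0 q = 0"
  by (simp add: bilin_ext_alt)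
lemma bilin_ext_02[simp]: "bilin_ext g p 0 = 0"
  by (simp add: bilin_ext_alt)
lemma bilin_ext_uminus1: "bilin_ext g (- p) q = - bilin_ext g p q"
  using bilin_ext_smul1[of g "-1" p q] by (simp add: smul_minus_one)
lemma bilin_ext_uminus2: "bilin_ext g p (- q) = - bilin_ext g p q"
  using bilin_ext_smul2[of g p "-1" q] by (simp add: smul_minus_one)

lemma bilin_ext_cong: "(\<And>i j. i \<in> Poly_Mapping.keys p \<Longrightarrow> j \<in> Poly_Mapping.keys q \<Longrightarrow> g i j = g' i j)
   \<Longrightarrow> bilin_ext g p q = bilin_ext g' p q"
  unfolding bilin_ext_def by (intro sum.cong refl) auto

lemma keys_bilin_ext: "Poly_Mapping.keys (bilin_ext g p q) \<subseteq>
   (\<Union>i\<in>Poly_Mapping.keys p. \<Union>j\<in>Poly_Mapping.keys q. Poly_Mapping.keys (g i j))"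
proof -
  have "Poly_Mapping.keys (lin_ext (\<lambda>i. lin_ext (g i) q) p) \<subseteq> (\<Union>i\<in>Poly_Mapping.keys p. Poly_Mapping.keys (lin_ext (g i) q))"
    by (rule keys_lin_ext)
  also have "\<dots> \<subseteq> (\<Union>i\<in>Poly_Mapping.keys p. \<Union>j\<in>Poly_Mapping.keys q. Poly_Mapping.keys (g i j))"
    using keys_lin_ext[of "g _" q] by (intro UN_mono) auto
  finally show ?thesis by (simp add: bilin_ext_alt)
qed

lemma bilin_induct[consumes 2, case_names zero1 zero2 sing add1 add2]:
  assumes "Poly_Mapping.keys p \<subseteq> S" "Poly_Mapping.keys q \<subseteq> T"
   and z1: "\<And>q. P 0 q" and z2: "\<And>p. P p 0"
   and sg: "\<And>x y c d. x \<in> S \<Longrightarrow> y \<in> T \<Longrightarrow> P (smul c (pt x)) (smul d (pt y))"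
   and a1: "\<And>a b q. P a q \<Longrightarrow> P b q \<Longrightarrow> P (a + b) q"
   and a2: "\<And>a b p. P p a \<Longrightarrow> P p b \<Longrightarrow> P p (a + b)"
  shows "P p q"
  using assms(1)
proof (induction p rule: lin_induct)
  case zero then show ?case by (rule z1)
next
  case (sing x c)
  from assms(2) show ?case
  proof (induction q rule: lin_induct)
    case zero then show ?case by (rule z2)
  next
    case (sing y d) then show ?case using \<open>x \<in> S\<close> by (rule sg[rotated])
  next
    case (add a b) then show ?case by (rule a2)
  qed
next
  case (add a b) then show ?case by (rule a1)
qed

section \<open>The tensor relations\<close>

lemma nullT_diff_rel_smul: "nullT sc p \<Longrightarrow> nullT sc (- p)"
  by (metis null_smul smul_minus_one)
lemma nullT_uminus: "nullT sc p \<Longrightarrow> nullT sc (- p)"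
  by (rule nullT_diff_rel_smul)
lemma nullT_diff: "nullT sc p \<Longrightarrow> nullT sc q \<Longrightarrow> nullT sc (p - q)"
  by (metis add_uminus_conv_diff null_add nullT_uminus)
lemma nullT_sum: "(\<And>i. i \<in> A \<Longrightarrow> nullT sc (f i)) \<Longrightarrow> nullT sc (sum f A)"
  by (induction A rule: infinite_finite_induct) (auto intro: null_zero null_add)

lemma nullT_lin_ext_fun: "(\<And>i. i \<in> Poly_Mapping.keys p \<Longrightarrow> nullT sc (f i)) \<Longrightarrow> nullT sc (lin_ext f p)"
  unfolding lin_ext_def by (auto intro!: nullT_sum null_smul)

lemma teq_refl[simp, intro]: "teq sc p p"
  by (simp add: teq_def null_zero)
lemma teq_sym: "teq sc p q \<Longrightarrow> teq sc q p"
  unfolding teq_def by (metis minus_diff_eq nullT_uminus)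
lemma teq_trans[trans]: "teq sc p q \<Longrightarrow> teq sc q r \<Longrightarrow> teq sc p r"
  unfolding teq_def using null_add[of sc "p - q" "q - r"] by simp
lemma teq_add: "teq sc p p' \<Longrightarrow> teq sc q q' \<Longrightarrow> teq sc (p + q) (p' + q')"
  unfolding teq_def using null_add[of sc "p - p'" "q - q'"] by (simp add: algebra_simps)
lemma teq_diff: "teq sc p p' \<Longrightarrow> teq sc q q' \<Longrightarrow> teq sc (p - q) (p' - q')"
  unfolding teq_def using nullT_diff[of sc "p - p'" "q - q'"] by (simp add: algebra_simps)
lemma teq_smul: "teq sc p p' \<Longrightarrow> teq sc (smul c p) (smul c p')"
  unfolding teq_def by (metis smul_diff null_smul)
lemma teq_uminus: "teq sc p p' \<Longrightarrow> teq sc (- p) (- p')"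
  unfolding teq_def using nullT_uminus[of sc "p - p'"] by (simp add: algebra_simps)
lemma teq_eq_trans[trans]: "teq sc p q \<Longrightarrow> q = r \<Longrightarrow> teq sc p r" by simp
lemma eq_teq_trans[trans]: "p = q \<Longrightarrow> teq sc q r \<Longrightarrow> teq sc p r" by simp
lemma teq_null: "teq sc p q \<longleftrightarrow> nullT sc (p - q)" by (simp add: teq_def)
lemma teq_sum: "(\<And>i. i \<in> A \<Longrightarrow> teq sc (f i) (g i)) \<Longrightarrow> teq sc (sum f A) (sum g A)"
  by (induction A rule: infinite_finite_induct) (auto intro: teq_add)

lemma teq_rel_add: "teq sc (pt (Bs @ [u @ [a + b] @ v] @ Cs))
   (pt (Bs @ [u @ [a] @ v] @ Cs) + pt (Bs @ [u @ [b] @ v] @ Cs))"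
  unfolding teq_def using null_add_rel[of sc Bs u a b v Cs] by (simp add: diff_diff_eq)
lemma teq_rel_smul: "teq sc (pt (Bs @ [u @ [sc c a] @ v] @ Cs)) (smul c (pt (Bs @ [u @ [a] @ v] @ Cs)))"
  unfolding teq_def using null_smul_rel .

lemma teq_lin_ext_fun: "(\<And>i. i \<in> Poly_Mapping.keys p \<Longrightarrow> teq sc (f i) (g i)) \<Longrightarrow> teq sc (lin_ext f p) (lin_ext g p)"
  unfolding teq_def lin_ext_fun_diff[symmetric] by (rule nullT_lin_ext_fun)

definition mlk :: "('k::comm_ring_1 \<Rightarrow> 'a::comm_ring_1 \<Rightarrow> 'a) \<Rightarrow> ('a list list \<Rightarrow> ('a list list \<Rightarrow>\<^sub>0 'k)) \<Rightarrow> bool" where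
  "mlk sc f \<longleftrightarrow>
    (\<forall>Bs u a b v Cs. teq sc (f (Bs @ [u @ [a + b] @ v] @ Cs)) (f (Bs @ [u @ [a] @ v] @ Cs) + f (Bs @ [u @ [b] @ v] @ Cs))) \<and>
    (\<forall>Bs u c a v Cs. teq sc (f (Bs @ [u @ [sc c a] @ v] @ Cs)) (smul c (f (Bs @ [u @ [a] @ v] @ Cs))))"

definition mlw :: "('k::comm_ring_1 \<Rightarrow> 'a::comm_ring_1 \<Rightarrow> 'a) \<Rightarrow> ('a list \<Rightarrow> ('a list list \<Rightarrow>\<^sub>0 'k)) \<Rightarrow> bool" where
  "mlw sc h \<longleftrightarrow>
    (\<forall>u a b v. teq sc (h (u @ [a + b] @ v)) (h (u @ [a] @ v) + h (u @ [b] @ v))) \<and>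
    (\<forall>u c a v. teq sc (h (u @ [sc c a] @ v)) (smul c (h (u @ [a] @ v))))"

lemma nullT_lin_ext: assumes "mlk sc f" "nullT sc p" shows "nullT sc (lin_ext f p)"
  using assms(2)
proof (induction rule: nullT.induct)
  case null_zero then show ?case by (simp add: nullT.null_zero)
next
  case (null_add_rel Bs u a b v Cs)
  then show ?case using assms(1) unfolding mlk_def teq_def by (simp add: lin_ext_diff lin_ext_add diff_diff_eq)
next
  case (null_smul_rel Bs u c a v Cs)
  then show ?case using assms(1) unfolding mlk_def teq_def by (simp add: lin_ext_diff lin_ext_smul)
next
  case (null_add p q) then show ?case by (simp add: lin_ext_add nullT.null_add)
next
  case (null_smul p c) then show ?case by (simp add: lin_ext_smul nullT.null_smul)
qed

lemma teq_lin_ext: "mlk sc f \<Longrightarrow> teq sc p q \<Longrightarrow> teq sc (lin_ext f p) (lin_ext f q)"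
  unfolding teq_def lin_ext_diff[symmetric] by (rule nullT_lin_ext)

lemma mlk_lin_ext_left: assumes "\<And>J. mlk sc (\<lambda>I. g I J)" shows "mlk sc (\<lambda>I. lin_ext (g I) q)"
  unfolding mlk_def lin_ext_fun_add[symmetric] lin_ext_fun_smul[symmetric]
  using assms unfolding mlk_def by (auto intro!: teq_lin_ext_fun)

lemma teq_bilin1: "(\<And>J. mlk sc (\<lambda>I. g I J)) \<Longrightarrow> teq sc p p' \<Longrightarrow> teq sc (bilin_ext g p q) (bilin_ext g p' q)"
  unfolding bilin_ext_alt by (rule teq_lin_ext[OF mlk_lin_ext_left])

lemma teq_bilin2: "(\<And>I. mlk sc (g I)) \<Longrightarrow> teq sc q q' \<Longrightarrow> teq sc (bilin_ext g p q) (bilin_ext g p q')"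
  unfolding bilin_ext_alt by (rule teq_lin_ext_fun) (rule teq_lin_ext)

lemma teq_bilin: "(\<And>J. mlk sc (\<lambda>I. g I J)) \<Longrightarrow> (\<And>I. mlk sc (g I)) \<Longrightarrow> teq sc p p' \<Longrightarrow> teq sc q q'
   \<Longrightarrow> teq sc (bilin_ext g p q) (bilin_ext g p' q')"
  by (rule teq_trans[OF teq_bilin1 teq_bilin2])

lemma one_block_eq: "Bs @ [X] @ Cs = [w] \<longleftrightarrow> Bs = [] \<and> Cs = [] \<and> X = w"
  by (cases Bs) auto

lemma mlk1: assumes "mlw sc h" shows "mlk sc (\<lambda>I. case I of [w] \<Rightarrow> h w | _ \<Rightarrow> 0)"
proof -
  have z: "(case Bs @ [X] @ Cs of [w] \<Rightarrow> h w | _ \<Rightarrow> 0) = 0" if "\<not> (Bs = [] \<and> Cs = [])" for Bs X Cs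
    using that by (cases Bs; cases Cs) (auto split: list.splits)
  show ?thesis unfolding mlk_def
  proof (intro conjI allI)
    fix Bs u a b v Cs
    show "teq sc (case Bs @ [u @ [a + b] @ v] @ Cs of [w] \<Rightarrow> h w | _ \<Rightarrow> 0)
       ((case Bs @ [u @ [a] @ v] @ Cs of [w] \<Rightarrow> h w | _ \<Rightarrow> 0) + (case Bs @ [u @ [b] @ v] @ Cs of [w] \<Rightarrow> h w | _ \<Rightarrow> 0))"
      using assms z[of Bs Cs] unfolding mlw_def by (cases "Bs = [] \<and> Cs = []") auto
  next
    fix Bs u c a v Cs
    show "teq sc (case Bs @ [u @ [sc c a] @ v] @ Cs of [w] \<Rightarrow> h w | _ \<Rightarrow> 0)
       (smul c (case Bs @ [u @ [a] @ v] @ Cs of [w] \<Rightarrow> h w | _ \<Rightarrow> 0))"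
      using assms z[of Bs Cs] unfolding mlw_def by (cases "Bs = [] \<and> Cs = []") auto
  qed
qed

lemma two_block_cases:
  obtains v where "Bs = []" "Cs = [v]" | u where "Bs = [u]" "Cs = []" | "\<forall>Z u v. Bs @ [Z] @ Cs \<noteq> [u, v]"
  by (cases Bs; cases Cs) (auto simp: Cons_eq_append_conv)

lemma mlk2: assumes "\<And>v. mlw sc (\<lambda>u. h u v)" "\<And>u. mlw sc (h u)"
  shows "mlk sc (\<lambda>I. case I of [u, v] \<Rightarrow> h u v | _ \<Rightarrow> 0)"
proof -
  have z: "(case I of [u, v] \<Rightarrow> h u v | _ \<Rightarrow> 0) = 0" if "\<forall>u v. I \<noteq> [u, v]" for I
    using that by (auto split: list.splits)
  show ?thesis unfolding mlk_def
  proof (intro conjI allI)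
    fix Bs u a b v Cs
    show "teq sc (case Bs @ [u @ [a + b] @ v] @ Cs of [u, v] \<Rightarrow> h u v | _ \<Rightarrow> 0)
       ((case Bs @ [u @ [a] @ v] @ Cs of [u, v] \<Rightarrow> h u v | _ \<Rightarrow> 0) + (case Bs @ [u @ [b] @ v] @ Cs of [u, v] \<Rightarrow> h u v | _ \<Rightarrow> 0))"
      by (cases Bs Cs rule: two_block_cases) (use assms z in \<open>auto simp: mlw_def\<close>)
  next
    fix Bs u c a v Cs
    show "teq sc (case Bs @ [u @ [sc c a] @ v] @ Cs of [u, v] \<Rightarrow> h u v | _ \<Rightarrow> 0)
       (smul c (case Bs @ [u @ [a] @ v] @ Cs of [u, v] \<Rightarrow> h u v | _ \<Rightarrow> 0))"
      by (cases Bs Cs rule: two_block_cases) (use assms z in \<open>auto simp: mlw_def\<close>)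
  qed
qed

lemma mlw_pt: "mlw sc (\<lambda>w. pt (Bs @ [u @ w @ v] @ Cs))"
  unfolding mlw_def using teq_rel_add[of sc Bs "u @ _" _ _ "_ @ v" Cs] teq_rel_smul[of sc Bs "u @ _" _ _ "_ @ v" Cs]
  by simp

lemma mlw_lin: "mlk sc f \<Longrightarrow> mlw sc h \<Longrightarrow> mlw sc (\<lambda>w. lin_ext f (h w))"
  unfolding mlw_def by (metis lin_ext_add lin_ext_smul teq_lin_ext)

lemma mlw_add: "mlw sc h \<Longrightarrow> mlw sc g \<Longrightarrow> mlw sc (\<lambda>w. h w + g w)"
  unfolding mlw_def
proof (intro conjI allI, goal_cases)
  case (1 u a b v)
  have "teq sc (h (u @ [a + b] @ v) + g (u @ [a + b] @ v)) ((h (u @ [a] @ v) + h (u @ [b] @ v)) + (g (u @ [a] @ v) + g (u @ [b] @ v)))"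
    using 1 by (auto intro: teq_add)
  then show ?case by (simp add: algebra_simps)
next
  case (2 u c a v)
  then show ?case by (auto simp: smul_add intro: teq_add)
qed
lemma mlw_diff: "mlw sc h \<Longrightarrow> mlw sc g \<Longrightarrow> mlw sc (\<lambda>w. h w - g w)"
  unfolding mlw_def
proof (intro conjI allI, goal_cases)
  case (1 u a b v)
  have "teq sc (h (u @ [a + b] @ v) - g (u @ [a + b] @ v)) ((h (u @ [a] @ v) + h (u @ [b] @ v)) - (g (u @ [a] @ v) + g (u @ [b] @ v)))"
    using 1 by (auto intro: teq_diff)
  then show ?case by (simp add: algebra_simps)
next
  case (2 u c a v)
  then show ?case by (auto simp: smul_diff intro: teq_diff)
qed
lemma mlw_smul: "mlw sc h \<Longrightarrow> mlw sc (\<lambda>w. smul c (h w))"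
  unfolding mlw_def by (metis smul_add smul_smul mult.commute teq_smul)

lemma mlw_bilin1: "(\<And>J. mlk sc (\<lambda>I. g I J)) \<Longrightarrow> mlw sc h \<Longrightarrow> mlw sc (\<lambda>w. bilin_ext g (h w) q)"
  unfolding mlw_def by (metis bilin_ext_add1 bilin_ext_smul1 teq_bilin1)
lemma mlw_bilin2: "(\<And>I. mlk sc (g I)) \<Longrightarrow> mlw sc h \<Longrightarrow> mlw sc (\<lambda>w. bilin_ext g p (h w))"
  unfolding mlw_def by (metis bilin_ext_add2 bilin_ext_smul2 teq_bilin2)

lemma mlw_zero: "mlw sc (\<lambda>w. 0)"
  unfolding mlw_def by simp




definition on1 :: "('a list \<Rightarrow> ('b \<Rightarrow>\<^sub>0 'k::zero)) \<Rightarrow> 'a list list \<Rightarrow> ('b \<Rightarrow>\<^sub>0 'k)" where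
  "on1 h I = (case I of [w] \<Rightarrow> h w | _ \<Rightarrow> 0)"
definition on2 :: "('a list \<Rightarrow> 'a list \<Rightarrow> ('b \<Rightarrow>\<^sub>0 'k::zero)) \<Rightarrow> 'a list list \<Rightarrow> ('b \<Rightarrow>\<^sub>0 'k)" where
  "on2 h I = (case I of [u, v] \<Rightarrow> h u v | _ \<Rightarrow> 0)"

lemma on1_single[simp]: "on1 h [w] = h w" by (simp add: on1_def)
lemma on1_other: "(\<And>w. I \<noteq> [w]) \<Longrightarrow> on1 h I = 0" by (auto simp: on1_def split: list.splits)
lemma on2_two[simp]: "on2 h [u, v] = h u v" by (simp add: on2_def)
lemma on2_other: "(\<And>u v. I \<noteq> [u, v]) \<Longrightarrow> on2 h I = 0" by (auto simp: on2_def split: list.splits)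
lemma on1_Nil[simp]: "on1 h [] = 0" by (simp add: on1_def)
lemma on2_Nil[simp]: "on2 h [] = 0" by (simp add: on2_def)
lemma on2_one[simp]: "on2 h [x] = 0" by (simp add: on2_def)
lemma on1_long[simp]: "on1 h (x # y # z) = 0" by (simp add: on1_def)
lemma on2_long[simp]: "on2 h (x # y # z # t) = 0" by (simp add: on2_def)

lemma on1_cases: "(\<And>w. I = [w] \<Longrightarrow> P (on1 h I)) \<Longrightarrow> ((\<And>w. I \<noteq> [w]) \<Longrightarrow> P 0) \<Longrightarrow> P (on1 h I)"
  by (metis on1_other)

lemma teq_on1: "(\<And>w. teq sc (h w) (g w)) \<Longrightarrow> teq sc (on1 h I) (on1 g I)"
  by (cases "\<exists>w. I = [w]") (auto simp: on1_other)
lemma teq_on2: "(\<And>u v. teq sc (h u v) (g u v)) \<Longrightarrow> teq sc (on2 h I) (on2 g I)"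
  by (cases "\<exists>u v. I = [u, v]") (auto simp: on2_other)

lemma on1_add: "on1 (\<lambda>w. h w + g w) I = on1 h I + on1 g I"
  by (cases "\<exists>w. I = [w]") (auto simp: on1_other)
lemma on1_diff: "on1 (\<lambda>w. h w - g w) I = on1 h I - on1 g I"
  by (cases "\<exists>w. I = [w]") (auto simp: on1_other)
lemma on1_smul: "on1 (\<lambda>w. smul c (h w)) I = smul c (on1 h I)"
  by (cases "\<exists>w. I = [w]") (auto simp: on1_other)
lemma on2_add: "on2 (\<lambda>u v. h u v + g u v) I = on2 h I + on2 g I"
  by (cases "\<exists>u v. I = [u, v]") (auto simp: on2_other)
lemma on2_smul: "on2 (\<lambda>u v. smul c (h u v)) I = smul c (on2 h I)"
  by (cases "\<exists>u v. I = [u, v]") (auto simp: on2_other)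

lemma mlk_on1: "mlw sc h \<Longrightarrow> mlk sc (on1 h)"
  unfolding on1_def[abs_def] by (rule mlk1)
lemma mlk_on2: "(\<And>v. mlw sc (\<lambda>u. h u v)) \<Longrightarrow> (\<And>u. mlw sc (h u)) \<Longrightarrow> mlk sc (on2 h)"
  unfolding on2_def[abs_def] by (rule mlk2)

lemma mlk_zero: "mlk sc (\<lambda>I. 0)"
  by (simp add: mlk_def)

lemma mlk_on1_const: "mlk sc (on1 h) \<Longrightarrow> mlk sc (\<lambda>I. on1 h I)" by simp

lemma mlk_on1_lin: "mlw sc h \<Longrightarrow> mlk sc (\<lambda>I. on1 h I)" by (simp add: mlk_on1)

lemma prepend_on1: "prepend c = lin_ext (on1 (\<lambda>w. pt [c # w]))"
  by (simp add: prepend_def on1_def[abs_def])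

lemma diamond_on1: "diamond p q = bilin_ext (\<lambda>I J. on1 (\<lambda>u. on1 (\<lambda>v. dw u v) J) I) p q"
  unfolding diamond_def
  by (intro bilin_ext_cong) (auto simp: on1_def split: list.splits)

lemma bullet_on2: "bullet p q = bilin_ext (\<lambda>I J. on2 (\<lambda>u v. on2 (\<lambda>u' v'. tens (dw u u') (dw v v')) J) I) p q"
  unfolding bullet_def
  by (intro bilin_ext_cong) (auto simp: on2_def split: list.splits)

lemma id_Pr_on2: "id_Pr = lin_ext (on2 (\<lambda>u v. pt [u, 1 # v]))"
  by (simp add: id_Pr_def on2_def[abs_def])

lemma DeltaT_on1: "DeltaT Delta = lin_ext (on1 (DTw Delta))"
  by (simp add: DeltaT_def on1_def[abs_def])

lemma tmap_left_on2: "tmap_left f = lin_ext (on2 (\<lambda>u v. tens (f u) (pt [v])))"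
  by (simp add: tmap_left_def on2_def[abs_def])
lemma tmap_right_on2: "tmap_right f = lin_ext (on2 (\<lambda>u v. tens (pt [u]) (f v)))"
  by (simp add: tmap_right_def on2_def[abs_def])
lemma counit_left_on2: "counit_left e = lin_ext (on2 (\<lambda>u v. smul (e u) (pt [v])))"
  by (simp add: counit_left_def on2_def[abs_def])

lemma prepend_pt[simp]: "prepend c (pt [w]) = pt [c # w]"
  by (simp add: prepend_on1)
lemma Pr_pt[simp]: "Pr (pt [w]) = pt [1 # w]"
  by (simp add: Pr_def)
lemma diamond_pt[simp]: "diamond (pt [u]) (pt [v]) = dw u v"
  by (simp add: diamond_on1)
lemma tens_pt[simp]: "tens (pt I) (pt J) = pt (I @ J)"
  by (simp add: tens_def)
lemma bullet_pt[simp]: "bullet (pt [u, v]) (pt [u', v']) = tens (dw u u') (dw v v')"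
  by (simp add: bullet_on2)
lemma id_Pr_pt[simp]: "id_Pr (pt [u, v]) = pt [u, 1 # v]"
  by (simp add: id_Pr_on2)
lemma DeltaT_pt[simp]: "DeltaT Delta (pt [w]) = DTw Delta w"
  by (simp add: DeltaT_on1)
lemma tmap_left_pt[simp]: "tmap_left f (pt [u, v]) = tens (f u) (pt [v])"
  by (simp add: tmap_left_on2)
lemma tmap_right_pt[simp]: "tmap_right f (pt [u, v]) = tens (pt [u]) (f v)"
  by (simp add: tmap_right_on2)
lemma counit_left_pt[simp]: "counit_left e (pt [u, v]) = smul (e u) (pt [v])"
  by (simp add: counit_left_on2)

lemmas lin_ext_lin = lin_ext_add lin_ext_diff lin_ext_smul lin_ext_uminus lin_ext_0

lemma prepend_lin: "prepend c (p + q) = prepend c p + prepend c q" "prepend c (p - q) = prepend c p - prepend c q"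
  "prepend c (smul d p) = smul d (prepend c p)" "prepend c 0 = 0" "prepend c (- p) = - prepend c p"
  by (simp_all add: prepend_on1 lin_ext_lin)
lemma Pr_lin: "Pr (p + q) = Pr p + Pr q" "Pr (p - q) = Pr p - Pr q"
  "Pr (smul d p) = smul d (Pr p)" "Pr 0 = 0" "Pr (- p) = - Pr p"
  by (simp_all add: Pr_def prepend_lin)
lemma id_Pr_lin: "id_Pr (p + q) = id_Pr p + id_Pr q" "id_Pr (p - q) = id_Pr p - id_Pr q"
  "id_Pr (smul d p) = smul d (id_Pr p)" "id_Pr 0 = 0" "id_Pr (- p) = - id_Pr p"
  by (simp_all add: id_Pr_on2 lin_ext_lin)
lemma DeltaT_lin: "DeltaT D (p + q) = DeltaT D p + DeltaT D q" "DeltaT D (p - q) = DeltaT D p - DeltaT D q"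
  "DeltaT D (smul d p) = smul d (DeltaT D p)" "DeltaT D 0 = 0" "DeltaT D (- p) = - DeltaT D p"
  by (simp_all add: DeltaT_on1 lin_ext_lin)
lemma tmap_left_lin: "tmap_left f (p + q) = tmap_left f p + tmap_left f q" "tmap_left f (p - q) = tmap_left f p - tmap_left f q"
  "tmap_left f (smul d p) = smul d (tmap_left f p)" "tmap_left f 0 = 0"
  by (simp_all add: tmap_left_on2 lin_ext_lin)
lemma tmap_right_lin: "tmap_right f (p + q) = tmap_right f p + tmap_right f q" "tmap_right f (p - q) = tmap_right f p - tmap_right f q"
  "tmap_right f (smul d p) = smul d (tmap_right f p)" "tmap_right f 0 = 0"
  by (simp_all add: tmap_right_on2 lin_ext_lin)
lemma counit_left_lin: "counit_left f (p + q) = counit_left f p + counit_left f q" "counit_left f (p - q) = counit_left f p - counit_left f q"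
  "counit_left f (smul d p) = smul d (counit_left f p)" "counit_left f 0 = 0"
  by (simp_all add: counit_left_on2 lin_ext_lin)

lemmas bilin_ext_lin = bilin_ext_add1 bilin_ext_add2 bilin_ext_diff1 bilin_ext_diff2 bilin_ext_smul1 bilin_ext_smul2
  bilin_ext_01 bilin_ext_02 bilin_ext_uminus1 bilin_ext_uminus2

lemma diamond_lin: "diamond (p + p') q = diamond p q + diamond p' q" "diamond p (q + q') = diamond p q + diamond p q'"
  "diamond (p - p') q = diamond p q - diamond p' q" "diamond p (q - q') = diamond p q - diamond p q'"
  "diamond (smul c p) q = smul c (diamond p q)" "diamond p (smul c q) = smul c (diamond p q)"
  "diamond 0 q = 0" "diamond p 0 = 0" "diamond (- p) q = - diamond p q" "diamond p (- q) = - diamond p q"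
  by (simp_all add: diamond_on1 bilin_ext_lin)
lemma tens_lin: "tens (p + p') q = tens p q + tens p' q" "tens p (q + q') = tens p q + tens p q'"
  "tens (p - p') q = tens p q - tens p' q" "tens p (q - q') = tens p q - tens p q'"
  "tens (smul c p) q = smul c (tens p q)" "tens p (smul c q) = smul c (tens p q)"
  "tens 0 q = 0" "tens p 0 = 0" "tens (- p) q = - tens p q" "tens p (- q) = - tens p q"
  by (simp_all add: tens_def bilin_ext_lin)
lemma bullet_lin: "bullet (p + p') q = bullet p q + bullet p' q" "bullet p (q + q') = bullet p q + bullet p q'"
  "bullet (p - p') q = bullet p q - bullet p' q" "bullet p (q - q') = bullet p q - bullet p q'"
  "bullet (smul c p) q = smul c (bullet p q)" "bullet p (smul c q) = smul c (bullet p q)"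
  "bullet 0 q = 0" "bullet p 0 = 0" "bullet (- p) q = - bullet p q" "bullet p (- q) = - bullet p q"
  by (simp_all add: bullet_on2 bilin_ext_lin)

lemma epsT_add: "epsT e (p + q) = epsT e p + epsT e q"
proof -
  define g where "g I = (case I of [w] \<Rightarrow> epsw e w | _ \<Rightarrow> 0)" for I
  have E: "epsT e p = (\<Sum>I\<in>Poly_Mapping.keys p. Poly_Mapping.lookup p I * g I)" for p
    by (simp add: epsT_def g_def)
  have *: "(\<Sum>i\<in>Poly_Mapping.keys p. Poly_Mapping.lookup p i * g i)
       = (\<Sum>i\<in>Poly_Mapping.keys p \<union> Poly_Mapping.keys q. Poly_Mapping.lookup p i * g i)"
        "(\<Sum>i\<in>Poly_Mapping.keys q. Poly_Mapping.lookup q i * g i)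
       = (\<Sum>i\<in>Poly_Mapping.keys p \<union> Poly_Mapping.keys q. Poly_Mapping.lookup q i * g i)"
    by (auto simp: in_keys_iff intro: sum.mono_neutral_cong_left)
  have "epsT e (p + q) = (\<Sum>i\<in>Poly_Mapping.keys p \<union> Poly_Mapping.keys q. Poly_Mapping.lookup (p + q) i * g i)"
    unfolding E by (rule sum.mono_neutral_cong_left) (auto simp: keys_add in_keys_iff)
  also have "\<dots> = epsT e p + epsT e q"
    unfolding E * by (simp add: lookup_add algebra_simps sum.distrib)
  finally show ?thesis .
qed

lemma epsT_smul: "epsT e (smul c p) = c * epsT e p"
proof -
  define g where "g I = (case I of [w] \<Rightarrow> epsw e w | _ \<Rightarrow> 0)" for I
  have E: "epsT e p = (\<Sum>I\<in>Poly_Mapping.keys p. Poly_Mapping.lookup p I * g I)" for p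
    by (simp add: epsT_def g_def)
  have "epsT e (smul c p) = (\<Sum>i\<in>Poly_Mapping.keys p. Poly_Mapping.lookup (smul c p) i * g i)"
    unfolding E by (rule sum.mono_neutral_cong_left) (auto simp: in_keys_iff)
  then show ?thesis by (simp add: E sum_distrib_left algebra_simps)
qed

lemma epsT_0: "epsT e 0 = 0" by (simp add: epsT_def)
lemma epsT_pt: "epsT e (pt [w]) = epsw e w" by (simp add: epsT_def)
lemma epsT_pt_other: "(\<And>w. I \<noteq> [w]) \<Longrightarrow> epsT e (pt I) = 0"
  by (auto simp: epsT_def split: list.splits)
lemma epsT_diff: "epsT e (p - q) = epsT e p - epsT e q"
  using epsT_add[of e "p - q" q] by simp

lemmas epsT_lin = epsT_add epsT_smul epsT_0 epsT_pt epsT_diff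

lemma dw_eqs:
  "dw [a] [b] = pt [[a * b]]"
  "w \<noteq> [] \<Longrightarrow> dw [a] (b # w) = pt [(a * b) # w]"
  "w \<noteq> [] \<Longrightarrow> dw (a # w) [b] = pt [(a * b) # w]"
  "u \<noteq> [] \<Longrightarrow> v \<noteq> [] \<Longrightarrow> dw (a # u) (b # v) = prepend (a * b) (dw u (1 # v) + dw (1 # u) v - prepend 1 (dw u v))"
  by (cases w; simp; fail)+ (cases u; cases v; simp)

lemma dw_Nil2[simp]: "dw v [] = 0"
  by (cases v) auto

lemma dw_comm: "dw u v = dw v u"
  by (induction u v rule: dw.induct) (simp_all add: mult.commute add.commute)


section \<open>Multilinearity of the operations\<close>

lemma k_alg_mult: "k_algebra sc \<Longrightarrow> sc c a * b = sc c (a * b)"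
  by (simp add: k_algebra_def)

lemma mlw_pt1: "mlw sc (\<lambda>w. pt [a # w])"
  using mlw_pt[of sc "[]" "[a]" "[]" "[]"] by simp
lemma mlw_pt_single: "mlw sc (\<lambda>w. pt [w])"
  using mlw_pt[of sc "[]" "[]" "[]" "[]"] by simp

lemma teq_prepend: "teq sc p q \<Longrightarrow> teq sc (prepend a p) (prepend a q)"
  unfolding prepend_on1 by (rule teq_lin_ext[OF mlk_on1[OF mlw_pt1]])
lemma teq_Pr: "teq sc p q \<Longrightarrow> teq sc (Pr p) (Pr q)"
  unfolding Pr_def by (rule teq_prepend)

lemma prepend_letter_add: "teq sc (prepend (a + b) p) (prepend a p + prepend b p)"
proof -
  have "prepend a p + prepend b p = lin_ext (\<lambda>I. on1 (\<lambda>w. pt [a # w] + pt [b # w]) I) p"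
    by (simp add: prepend_on1 on1_add lin_ext_fun_add)
  moreover have "teq sc (prepend (a + b) p) (lin_ext (\<lambda>I. on1 (\<lambda>w. pt [a # w] + pt [b # w]) I) p)"
    unfolding prepend_on1
    by (intro teq_lin_ext_fun teq_on1) (use teq_rel_add[of sc "[]" "[]" a b _ "[]"] in simp)
  ultimately show ?thesis by simp
qed

lemma prepend_letter_smul: "teq sc (prepend (sc c a) p) (smul c (prepend a p))"
proof -
  have "smul c (prepend a p) = lin_ext (\<lambda>I. on1 (\<lambda>w. smul c (pt [a # w])) I) p"
    by (simp add: prepend_on1 on1_smul lin_ext_fun_smul)
  moreover have "teq sc (prepend (sc c a) p) (lin_ext (\<lambda>I. on1 (\<lambda>w. smul c (pt [a # w])) I) p)"
    unfolding prepend_on1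
    by (intro teq_lin_ext_fun teq_on1) (use teq_rel_smul[of sc "[]" "[]" c a _ "[]"] in simp)
  ultimately show ?thesis by simp
qed

lemma dw_lin_aux:
  fixes sc :: "'k::comm_ring_1 \<Rightarrow> 'a::comm_ring_1 \<Rightarrow> 'a"
  assumes ka: "k_algebra sc"
  shows "teq sc (dw (u1 @ [x + y] @ u2) v) (dw (u1 @ [x] @ u2) v + dw (u1 @ [y] @ u2) v) \<and>
         teq sc (dw (u1 @ [sc c x] @ u2) v) (smul c (dw (u1 @ [x] @ u2) v))"
proof (induction "length u1 + length u2 + length v" arbitrary: u1 u2 v rule: less_induct)
  case less
  have km: "sc c a * b = sc c (a * b)" for a b using k_alg_mult[OF ka] .
  consider (nil) "v = []" | (one) b where "v = [b]" | (two) b v' where "v = b # v'" "v' \<noteq> []"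
    by (metis list.exhaust)
  then show ?case
  proof cases
    case nil then show ?thesis by simp
  next
    case one
    show ?thesis
    proof (cases u1)
      case Nil
      show ?thesis
      proof (cases "u2 = []")
        case True
        then show ?thesis using Nil one teq_rel_add[of sc "[]" "[]" "x * b" "y * b" "[]" "[]"]
            teq_rel_smul[of sc "[]" "[]" c "x * b" "[]" "[]"]
          by (simp add: dw_eqs distrib_right km)
      next
        case False
        then show ?thesis using Nil one teq_rel_add[of sc "[]" "[]" "x * b" "y * b" u2 "[]"]
            teq_rel_smul[of sc "[]" "[]" c "x * b" u2 "[]"]
          by (simp add: dw_eqs distrib_right km)
      qed
    next
      case (Cons z u1')
      then show ?thesis using one teq_rel_add[of sc "[]" "(z * b) # u1'" x y u2 "[]"]
          teq_rel_smul[of sc "[]" "(z * b) # u1'" c x u2 "[]"]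
        by (simp add: dw_eqs)
    qed
  next
    case two
    show ?thesis
    proof (cases u1)
      case Nil
      show ?thesis
      proof (cases "u2 = []")
        case True
        then show ?thesis using Nil two teq_rel_add[of sc "[]" "[]" "x * b" "y * b" v' "[]"]
            teq_rel_smul[of sc "[]" "[]" c "x * b" v' "[]"]
          by (simp add: dw_eqs distrib_right km)
      next
        case False
        then show ?thesis using Nil two prepend_letter_add[of sc "x * b" "y * b"] prepend_letter_smul[of sc c "x * b"]
          by (simp add: dw_eqs distrib_right km)
      qed
    next
      case (Cons z u1')
      define A :: "'a \<Rightarrow> ('a list list \<Rightarrow>\<^sub>0 'k)" where "A t = dw (u1' @ [t] @ u2) (1 # v')" for t
      define B :: "'a \<Rightarrow> ('a list list \<Rightarrow>\<^sub>0 'k)" where "B t = dw ((1 # u1') @ [t] @ u2) v'" for t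
      define C :: "'a \<Rightarrow> ('a list list \<Rightarrow>\<^sub>0 'k)" where "C t = dw (u1' @ [t] @ u2) v'" for t
      define S :: "'a \<Rightarrow> ('a list list \<Rightarrow>\<^sub>0 'k)" where "S t = A t + B t - prepend 1 (C t)" for t
      have eq: "dw (u1 @ [t] @ u2) v = prepend (z * b) (S t)" for t
        using Cons two by (simp add: dw_eqs A_def B_def C_def S_def)
      have lt: "length u1' + length u2 + length (1 # v') < length u1 + length u2 + length v"
        "length (1 # u1') + length u2 + length v' < length u1 + length u2 + length v"
        "length u1' + length u2 + length v' < length u1 + length u2 + length v"
        using Cons two by auto
      note IA = less[OF lt(1)] and IB = less[OF lt(2)] and IC = less[OF lt(3)]
      have "teq sc (S (x + y)) ((A x + A y) + (B x + B y) - prepend 1 (C x + C y))"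
        unfolding S_def using IA IB IC
        by (intro teq_add teq_diff teq_prepend) (auto simp: A_def B_def C_def)
      then have s1: "teq sc (S (x + y)) (S x + S y)"
        by (simp add: S_def prepend_lin algebra_simps)
      have "teq sc (S (sc c x)) (smul c (A x) + smul c (B x) - prepend 1 (smul c (C x)))"
        unfolding S_def using IA IB IC
        by (intro teq_add teq_diff teq_prepend) (auto simp: A_def B_def C_def)
      then have s2: "teq sc (S (sc c x)) (smul c (S x))"
        by (simp add: S_def prepend_lin smul_add smul_diff)
      show ?thesis unfolding eq
        using teq_prepend[OF s1, of "z * b"] teq_prepend[OF s2, of "z * b"]
        by (simp add: prepend_lin)
    qed
  qed
qed

lemma dw_mlw1: "k_algebra sc \<Longrightarrow> mlw sc (\<lambda>u. dw u v)"
  unfolding mlw_def using dw_lin_aux by blast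
lemma dw_mlw2: "k_algebra sc \<Longrightarrow> mlw sc (\<lambda>v. dw u v)"
  using dw_mlw1[of sc u] by (simp add: dw_comm)

lemma mlw_on1_param: "(\<And>v. mlw sc (\<lambda>u. g u v)) \<Longrightarrow> mlw sc (\<lambda>u. on1 (g u) J)"
  by (cases "\<exists>w. J = [w]") (auto simp: on1_other mlw_zero)
lemma mlw_on2_param: "(\<And>v v'. mlw sc (\<lambda>u. g u v v')) \<Longrightarrow> mlw sc (\<lambda>u. on2 (g u) J)"
  by (cases "\<exists>w w'. J = [w, w']") (auto simp: on2_other mlw_zero)
lemma mlk_on1_param: "(\<And>u. mlk sc (G u)) \<Longrightarrow> mlk sc (\<lambda>J. on1 (\<lambda>u. G u J) I)"
  by (cases "\<exists>w. I = [w]") (auto simp: on1_other mlk_zero)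
lemma mlk_on2_param: "(\<And>u v. mlk sc (G u v)) \<Longrightarrow> mlk sc (\<lambda>J. on2 (\<lambda>u v. G u v J) I)"
  by (cases "\<exists>w w'. I = [w, w']") (auto simp: on2_other mlk_zero)

lemma mlk_tens1: "mlk sc (\<lambda>I. pt (I @ J))"
  unfolding mlk_def using teq_rel_add[of sc _ _ _ _ _ "_ @ J"] teq_rel_smul[of sc _ _ _ _ _ "_ @ J"] by simp
lemma mlk_tens2: "mlk sc (\<lambda>J. pt (I @ J))"
  unfolding mlk_def using teq_rel_add[of sc "I @ _"] teq_rel_smul[of sc "I @ _"] by simp

lemma teq_tens: "teq sc p p' \<Longrightarrow> teq sc q q' \<Longrightarrow> teq sc (tens p q) (tens p' q')"
  unfolding tens_def by (rule teq_bilin) (rule mlk_tens1, rule mlk_tens2)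

lemma mlw_tens1: "mlw sc h \<Longrightarrow> mlw sc (\<lambda>w. tens (h w) q)"
  unfolding tens_def by (rule mlw_bilin1) (rule mlk_tens1)
lemma mlw_tens2: "mlw sc h \<Longrightarrow> mlw sc (\<lambda>w. tens p (h w))"
  unfolding tens_def by (rule mlw_bilin2) (rule mlk_tens2)

lemma teq_diamond: assumes "k_algebra sc" "teq sc p p'" "teq sc q q'"
  shows "teq sc (diamond p q) (diamond p' q')"
  unfolding diamond_on1
proof (rule teq_bilin[OF _ _ assms(2,3)])
  fix J show "mlk sc (\<lambda>I. on1 (\<lambda>u. on1 (dw u) J) I)"
    by (intro mlk_on1 mlw_on1_param dw_mlw1 assms(1))
next
  fix I show "mlk sc (\<lambda>J. on1 (\<lambda>u. on1 (dw u) J) I)"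
    by (intro mlk_on1_param mlk_on1 dw_mlw2 assms(1))
qed

lemma mlw_diamond1: "k_algebra sc \<Longrightarrow> mlw sc h \<Longrightarrow> mlw sc (\<lambda>w. diamond (h w) q)"
  unfolding mlw_def by (metis diamond_lin(1,5) teq_diamond teq_refl)
lemma mlw_diamond2: "k_algebra sc \<Longrightarrow> mlw sc h \<Longrightarrow> mlw sc (\<lambda>w. diamond p (h w))"
  unfolding mlw_def by (metis diamond_lin(2,6) teq_diamond teq_refl)

lemma id_Pr_mlk: "mlk sc (on2 (\<lambda>u v. pt [u, 1 # v]))"
  by (rule mlk_on2) (use mlw_pt[of sc "[]" "[]" "[]" "[_]"] mlw_pt[of sc "[_]" "[1]" "[]" "[]"] in simp_all)
lemma teq_id_Pr: "teq sc p q \<Longrightarrow> teq sc (id_Pr p) (id_Pr q)"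
  unfolding id_Pr_on2 by (rule teq_lin_ext[OF id_Pr_mlk])

lemma bullet_mlk1: "k_algebra sc \<Longrightarrow> mlk sc (\<lambda>I. on2 (\<lambda>u v. on2 (\<lambda>u' v'. tens (dw u u') (dw v v')) J) I)"
  by (intro mlk_on2 mlw_on2_param mlw_tens1 mlw_tens2 dw_mlw1)
lemma bullet_mlk2: "k_algebra sc \<Longrightarrow> mlk sc (\<lambda>J. on2 (\<lambda>u v. on2 (\<lambda>u' v'. tens (dw u u') (dw v v')) J) I)"
  by (intro mlk_on2_param mlk_on2 mlw_tens1 mlw_tens2 dw_mlw2)

lemma teq_bullet: assumes "k_algebra sc" "teq sc p p'" "teq sc q q'"
  shows "teq sc (bullet p q) (bullet p' q')"
  unfolding bullet_on2 by (rule teq_bilin[OF bullet_mlk1[OF assms(1)] bullet_mlk2[OF assms(1)] assms(2,3)])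

lemma teq_tmap_left: "mlw sc f \<Longrightarrow> teq sc p q \<Longrightarrow> teq sc (tmap_left f p) (tmap_left f q)"
  unfolding tmap_left_on2
  by (rule teq_lin_ext) (intro mlk_on2 mlw_tens1 mlw_tens2 mlw_pt_single)
lemma teq_tmap_right: "mlw sc f \<Longrightarrow> teq sc p q \<Longrightarrow> teq sc (tmap_right f p) (tmap_right f q)"
  unfolding tmap_right_on2
  by (rule teq_lin_ext) (intro mlk_on2 mlw_tens1 mlw_tens2 mlw_pt_single)

lemma mlw_scalar:
  assumes "\<And>u a b v. e (u @ [a + b] @ v) = e (u @ [a] @ v) + e (u @ [b] @ v)"
    and "\<And>u c a v. e (u @ [sc c a] @ v) = c * e (u @ [a] @ v)"
  shows "mlw sc (\<lambda>u. smul (e u) X)"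
  unfolding mlw_def using assms by (simp add: smul_add_left)

lemma epsw_add: "(\<And>a b. eps (a + b) = eps a + eps b) \<Longrightarrow> epsw eps (u @ [a + b] @ v) = epsw eps (u @ [a] @ v) + epsw eps (u @ [b] @ v)"
  by (simp add: epsw_def algebra_simps)
lemma epsw_sc: "(\<And>c a. eps (sc c a) = c * eps a) \<Longrightarrow> epsw eps (u @ [sc c a] @ v) = c * epsw eps (u @ [a] @ v)"
  by (simp add: epsw_def algebra_simps)

lemma teq_counit_left:
  assumes "\<And>a b. eps (a + b) = eps a + eps b" "\<And>c a. eps (sc c a) = c * eps a" "teq sc p q"
  shows "teq sc (counit_left (epsw eps) p) (counit_left (epsw eps) q)"
  unfolding counit_left_on2
  by (rule teq_lin_ext[OF _ assms(3)]) (intro mlk_on2 mlw_scalar epsw_add epsw_sc assms(1,2) mlw_smul mlw_pt_single)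

lemma epsT_null:
  assumes "\<And>a b. eps (a + b) = eps a + eps b" "\<And>c a. eps (sc c a) = c * eps a" "nullT sc p"
  shows "epsT eps p = 0"
  using assms(3)
proof (induction rule: nullT.induct)
  case null_zero then show ?case by (simp add: epsT_0)
next
  case (null_add_rel Bs u a b v Cs)
  show ?case
  proof (cases "Bs = [] \<and> Cs = []")
    case True then show ?thesis by (simp add: epsT_lin epsw_add[OF assms(1), simplified])
  next
    case False
    then have "\<And>w. Bs @ [X] @ Cs \<noteq> [w]" for X using one_block_eq[of Bs X Cs] by auto
    then show ?thesis by (simp add: epsT_lin epsT_pt_other del: append.simps append_Cons append_Nil)
  qed
next
  case (null_smul_rel Bs u c a v Cs)
  show ?case
  proof (cases "Bs = [] \<and> Cs = []")
    case True then show ?thesis by (simp add: epsT_lin epsw_sc[OF assms(2), simplified])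
  next
    case False
    then have "\<And>w. Bs @ [X] @ Cs \<noteq> [w]" for X using one_block_eq[of Bs X Cs] by auto
    then show ?thesis by (simp add: epsT_lin epsT_pt_other del: append.simps append_Cons append_Nil)
  qed
next
  case (null_add p q) then show ?case by (simp add: epsT_lin)
next
  case (null_smul p c) then show ?case by (simp add: epsT_lin)
qed




declare diamond_pt[simp del]

definition SH :: "'a list list set" where "SH = {[w] | w. w \<noteq> []}"

lemma is_sh_iff: "is_sh p \<longleftrightarrow> Poly_Mapping.keys p \<subseteq> SH"
  by (auto simp: is_sh_def SH_def)

lemma keys_lin_ext_sub: "(\<And>i. Poly_Mapping.keys (f i) \<subseteq> S) \<Longrightarrow> Poly_Mapping.keys (lin_ext f p) \<subseteq> S"
  using keys_lin_ext[of f p] by blast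
lemma keys_bilin_ext_sub: "(\<And>i j. Poly_Mapping.keys (g i j) \<subseteq> S) \<Longrightarrow> Poly_Mapping.keys (bilin_ext g p q) \<subseteq> S"
  using keys_bilin_ext[of g p q] by blast

lemma keys_prepend: "Poly_Mapping.keys (prepend c p) \<subseteq> SH"
  unfolding prepend_on1 by (rule keys_lin_ext_sub) (auto simp: SH_def on1_def split: list.splits)

lemma keys_prepend': "x \<in> Poly_Mapping.keys (prepend c p) \<Longrightarrow> \<exists>w. x = [w] \<and> w \<noteq> []"
  using keys_prepend[of c p] by (auto simp: SH_def)

lemma keys_dw: "Poly_Mapping.keys (dw u v) \<subseteq> SH"
  by (induction u v rule: dw.induct) (auto simp: SH_def dest!: keys_prepend')

lemma keys_diamond: "Poly_Mapping.keys (diamond p q) \<subseteq> SH"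
  unfolding diamond_on1 by (rule keys_bilin_ext_sub) (use keys_dw in \<open>auto simp: on1_def split: list.splits\<close>)

lemma sh_diamond: "is_sh (diamond p q)" by (simp add: is_sh_iff keys_diamond)
lemma sh_prepend: "is_sh (prepend c p)" by (simp add: is_sh_iff keys_prepend)
lemma sh_Pr: "is_sh (Pr p)" by (simp add: Pr_def sh_prepend)
lemma sh_dw: "is_sh (dw u v)" by (simp add: is_sh_iff keys_dw)
lemma sh_pt: "w \<noteq> [] \<Longrightarrow> is_sh (pt [w])" by (simp add: is_sh_iff SH_def)
lemma sh_add: "is_sh p \<Longrightarrow> is_sh q \<Longrightarrow> is_sh (p + q)"
  using keys_add[of p q] by (auto simp: is_sh_iff)
lemma sh_diff: "is_sh p \<Longrightarrow> is_sh q \<Longrightarrow> is_sh (p - q)"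
  using keys_diff[of p q] by (auto simp: is_sh_iff)
lemma sh_smul: "is_sh p \<Longrightarrow> is_sh (smul c p)"
  using keys_smul[of c p] by (auto simp: is_sh_iff)
lemma sh_0: "is_sh 0" by (simp add: is_sh_def)

lemmas sh_intros = sh_diamond sh_prepend sh_Pr sh_dw sh_add sh_diff sh_smul sh_0

lemma sh_induct[consumes 1, case_names zero sing add]:
  assumes "is_sh p" "P 0" "\<And>w c. w \<noteq> [] \<Longrightarrow> P (smul c (pt [w]))" "\<And>a b. P a \<Longrightarrow> P b \<Longrightarrow> P (a + b)"
  shows "P p"
  using assms(1)[unfolded is_sh_iff]
  by (induction p rule: lin_induct) (use assms(2-) in \<open>auto simp: SH_def\<close>)

section \<open>Exact algebraic identities for diamond\<close>

lemma on1_zero[simp]: "on1 (\<lambda>w. 0) I = 0"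
  by (cases "\<exists>w. I = [w]") (auto simp: on1_other)

lemma diamond_pt_other1: "(\<And>u. x \<noteq> [u]) \<Longrightarrow> diamond (pt x) q = 0"
  by (simp add: diamond_on1 bilin_ext_alt on1_other)
lemma diamond_pt_other2: "(\<And>u. x \<noteq> [u]) \<Longrightarrow> diamond p (pt x) = 0"
  by (simp add: diamond_on1 bilin_ext_alt on1_other)

lemma diamond_comm: "diamond p q = diamond q p"
proof -
  have "diamond p q = diamond q p" if "Poly_Mapping.keys p \<subseteq> UNIV" "Poly_Mapping.keys q \<subseteq> UNIV"
    using that
  proof (induction p q rule: bilin_induct)
    case (sing x y c d)
    then show ?case
      by (cases "\<exists>u. x = [u]"; cases "\<exists>v. y = [v]")
        (auto simp: diamond_lin diamond_pt_other1 diamond_pt_other2 diamond_pt dw_comm mult.commute)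
  qed (simp_all add: diamond_lin)
  then show ?thesis by simp
qed

abbreviation L :: "'a::comm_ring_1 \<Rightarrow> ('a list list \<Rightarrow>\<^sub>0 'k::comm_ring_1) \<Rightarrow> ('a list list \<Rightarrow>\<^sub>0 'k)" where
  "L a p \<equiv> diamond (pt [[a]]) p"

lemma dw_single_left: "w \<noteq> [] \<Longrightarrow> dw [a] w = pt [(a * hd w) # tl w]"
proof (cases w)
  case (Cons x w')
  then show ?thesis by (cases "w' = []") (auto simp: dw_eqs)
qed simp

lemma unit_left: "is_sh X \<Longrightarrow> L 1 X = X"
  by (induction X rule: sh_induct) (auto simp: diamond_lin diamond_pt dw_single_left)

lemma prepend_pt_other: "(\<And>w. x \<noteq> [w]) \<Longrightarrow> prepend c (pt x) = 0"
  by (simp add: prepend_on1 on1_other)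

lemma L_prepend: "L a (prepend c X) = prepend (a * c) X"
proof -
  have "Poly_Mapping.keys X \<subseteq> UNIV" by simp
  then show ?thesis
  proof (induction X rule: lin_induct)
    case (sing x d)
    then show ?case
      by (cases "\<exists>u. x = [u]") (auto simp: diamond_lin prepend_lin prepend_pt_other diamond_pt dw_single_left)
  qed (simp_all add: diamond_lin prepend_lin)
qed

lemma prepend_L_Pr: "prepend c X = L c (Pr X)"
  by (simp add: Pr_def L_prepend)

lemma L_L: "is_sh X \<Longrightarrow> L a (L b X) = L (a * b) X"
  by (induction X rule: sh_induct) (auto simp: diamond_lin diamond_pt dw_single_left mult.assoc)

lemma pt_single_L: "pt [[a]] = L a (pt [[1]])"
  by (simp add: diamond_pt dw_eqs)
lemma pt_cons_L: "w \<noteq> [] \<Longrightarrow> pt [a # w] = L a (Pr (pt [w]))"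
  by (metis prepend_L_Pr prepend_pt)

lemma L_diamond_words: "u \<noteq> [] \<Longrightarrow> v \<noteq> [] \<Longrightarrow> diamond (L a (pt [u])) (pt [v]) = L a (diamond (pt [u]) (pt [v]))"
proof -
  assume u: "u \<noteq> []" and v: "v \<noteq> []"
  obtain x u' where u': "u = x # u'" using u by (cases u) auto
  obtain y v' where v': "v = y # v'" using v by (cases v) auto
  show ?thesis
  proof (cases "u' = []"; cases "v' = []")
    assume "u' \<noteq> []" "v' \<noteq> []"
    then show ?thesis by (simp add: u' v' diamond_pt dw_eqs dw_single_left L_prepend mult.assoc)
  qed (auto simp: u' v' diamond_pt dw_eqs mult.assoc dw_single_left)
qed

lemma L_diamond: "is_sh X \<Longrightarrow> is_sh Y \<Longrightarrow> diamond (L a X) Y = L a (diamond X Y)"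
proof -
  assume "is_sh X" "is_sh Y"
  then have "Poly_Mapping.keys X \<subseteq> SH" "Poly_Mapping.keys Y \<subseteq> SH" by (simp_all add: is_sh_iff)
  then show ?thesis
  proof (induction X Y rule: bilin_induct)
    case (sing x y c d)
    then show ?case by (auto simp: SH_def diamond_lin L_diamond_words)
  qed (simp_all add: diamond_lin)
qed

lemma diamond_L: "is_sh X \<Longrightarrow> is_sh Y \<Longrightarrow> diamond X (L a Y) = L a (diamond X Y)"
  by (metis L_diamond diamond_comm)

section \<open>Nijenhuis\<close>

definition NN :: "('a::comm_ring_1 list list \<Rightarrow>\<^sub>0 'k::comm_ring_1) \<Rightarrow> ('a list list \<Rightarrow>\<^sub>0 'k) \<Rightarrow> ('a list list \<Rightarrow>\<^sub>0 'k)" where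
  "NN X Y = diamond X (Pr Y) + diamond (Pr X) Y - Pr (diamond X Y)"

lemma nij: "is_sh X \<Longrightarrow> is_sh Y \<Longrightarrow> diamond (Pr X) (Pr Y) = Pr (NN X Y)"
proof -
  assume "is_sh X" "is_sh Y"
  then have "Poly_Mapping.keys X \<subseteq> SH" "Poly_Mapping.keys Y \<subseteq> SH" by (simp_all add: is_sh_iff)
  then show ?thesis
  proof (induction X Y rule: bilin_induct)
    case (sing x y c d)
    then show ?case
      by (auto simp: SH_def NN_def diamond_lin Pr_lin diamond_pt) (simp add: dw_eqs Pr_def prepend_lin smul_add smul_diff)
  next
    case (add1 a b q) then show ?case by (simp add: NN_def diamond_lin Pr_lin algebra_simps)
  next
    case (add2 a b p) then show ?case by (simp add: NN_def diamond_lin Pr_lin algebra_simps)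
  qed (simp_all add: NN_def diamond_lin Pr_lin)
qed


section \<open>Associativity\<close>

definition T1 where "T1 U V W = diamond (diamond U (Pr V)) (Pr W) + diamond (diamond (Pr U) V) (Pr W) + diamond (diamond (Pr U) (Pr V)) W"
definition T2 where "T2 U V W = diamond (diamond U V) (Pr W) + diamond (diamond U (Pr V)) W + diamond (diamond (Pr U) V) W"

lemma sh_NN: "is_sh (NN X Y)" by (simp add: NN_def sh_intros)

lemma Pform:
  assumes sh: "is_sh U" "is_sh V" "is_sh W"
  shows "diamond (diamond (Pr U) (Pr V)) (Pr W) = Pr (T1 U V W - Pr (T2 U V W) + Pr (Pr (diamond (diamond U V) W)))"
proof -
  have s1: "diamond (Pr U) (Pr V) = Pr (NN U V)" using nij sh by blast
  have s2: "diamond (Pr (NN U V)) (Pr W) = Pr (NN (NN U V) W)" using nij sh sh_NN by blast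
  have s4: "diamond (Pr (diamond U V)) (Pr W) = Pr (NN (diamond U V) W)" using nij sh sh_diamond by blast
  have e1: "diamond (NN U V) (Pr W) = diamond (diamond U (Pr V)) (Pr W) + diamond (diamond (Pr U) V) (Pr W)
      - Pr (diamond (diamond U V) (Pr W) + diamond (Pr (diamond U V)) W - Pr (diamond (diamond U V) W))"
    unfolding NN_def[of U V] diamond_lin s4 NN_def[of "diamond U V" W] ..
  have e2: "diamond (NN U V) W = diamond (diamond U (Pr V)) W + diamond (diamond (Pr U) V) W - diamond (Pr (diamond U V)) W"
    unfolding NN_def[of U V] diamond_lin ..
  have "NN (NN U V) W = T1 U V W - Pr (T2 U V W) + Pr (Pr (diamond (diamond U V) W))"
    unfolding NN_def[of "NN U V" W] e1 e2 s1[symmetric] T1_def T2_def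
    by (simp add: Pr_lin algebra_simps)
  then show ?thesis using s1 s2 by simp
qed

lemma unit_right: "is_sh X \<Longrightarrow> diamond X (pt [[1]]) = X"
  using unit_left diamond_comm by metis

lemma decomp: "u \<noteq> [] \<Longrightarrow> \<exists>a Y. pt [u] = L a Y \<and> is_sh Y \<and>
   (Y = pt [[1]] \<or> (\<exists>u'. u' \<noteq> [] \<and> Y = Pr (pt [u']) \<and> length u = Suc (length u')))"
proof -
  assume "u \<noteq> []"
  then obtain a u' where u: "u = a # u'" by (cases u) auto
  show ?thesis
  proof (cases "u' = []")
    case True then show ?thesis using pt_single_L[of a] by (auto simp: u sh_pt)
  next
    case False then show ?thesis using pt_cons_L[of u' a]
      by (intro exI[of _ a] exI[of _ "Pr (pt [u'])"]) (auto simp: u sh_Pr simp del: Pr_pt)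
  qed
qed

lemma reassoc_L:
  assumes "is_sh Y1" "is_sh Y2" "is_sh Y3"
  shows "diamond (diamond (L a Y1) (L b Y2)) (L c Y3) = L a (L b (L c (diamond (diamond Y1 Y2) Y3)))"
    and "diamond (L a Y1) (diamond (L b Y2) (L c Y3)) = L a (L b (L c (diamond Y1 (diamond Y2 Y3))))"
  using assms by (simp_all add: L_diamond diamond_L sh_diamond L_L mult_ac)

lemma assoc_words:
  "u \<noteq> [] \<Longrightarrow> v \<noteq> [] \<Longrightarrow> w \<noteq> [] \<Longrightarrow>
   diamond (diamond (pt [u] :: 'a::comm_ring_1 list list \<Rightarrow>\<^sub>0 'k::comm_ring_1) (pt [v])) (pt [w]) = diamond (pt [u]) (diamond (pt [v]) (pt [w]))"
proof (induction "length u + length v + length w" arbitrary: u v w rule: less_induct)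
  case less
  let ?n = "length u + length v + length w"
  have IH: "\<And>x y z. length x + length y + length z < ?n \<Longrightarrow> x \<noteq> [] \<Longrightarrow> y \<noteq> [] \<Longrightarrow> z \<noteq> [] \<Longrightarrow>
     diamond (diamond (pt [x] :: 'a list list \<Rightarrow>\<^sub>0 'k) (pt [y])) (pt [z]) = diamond (pt [x]) (diamond (pt [y]) (pt [z]))"
    using less.hyps by blast
  have Pc: "diamond (diamond (Pr (pt [x] :: 'a list list \<Rightarrow>\<^sub>0 'k)) (Pr (pt [y]))) (Pr (pt [z])) = diamond (Pr (pt [x])) (diamond (Pr (pt [y])) (Pr (pt [z])))"
    if xyz: "x \<noteq> []" "y \<noteq> []" "z \<noteq> []" "length x + length y + length z + 3 \<le> ?n" for x y z
  proof -
    define U :: "'a list list \<Rightarrow>\<^sub>0 'k" where "U = pt [x]"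
    define V :: "'a list list \<Rightarrow>\<^sub>0 'k" where "V = pt [y]"
    define W :: "'a list list \<Rightarrow>\<^sub>0 'k" where "W = pt [z]"
    have sh: "is_sh U" "is_sh V" "is_sh W" using xyz by (simp_all add: U_def V_def W_def sh_pt)
    have i1: "diamond (diamond U (Pr V)) (Pr W) = diamond U (diamond (Pr V) (Pr W))"
      unfolding U_def V_def W_def Pr_pt by (rule IH) (use xyz in auto)
    have i2: "diamond (diamond (Pr U) V) (Pr W) = diamond (Pr U) (diamond V (Pr W))"
      unfolding U_def V_def W_def Pr_pt by (rule IH) (use xyz in auto)
    have i3: "diamond (diamond (Pr U) (Pr V)) W = diamond (Pr U) (diamond (Pr V) W)"
      unfolding U_def V_def W_def Pr_pt by (rule IH) (use xyz in auto)
    have i4: "diamond (diamond U V) (Pr W) = diamond U (diamond V (Pr W))"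
      unfolding U_def V_def W_def Pr_pt by (rule IH) (use xyz in auto)
    have i5: "diamond (diamond U (Pr V)) W = diamond U (diamond (Pr V) W)"
      unfolding U_def V_def W_def Pr_pt by (rule IH) (use xyz in auto)
    have i6: "diamond (diamond (Pr U) V) W = diamond (Pr U) (diamond V W)"
      unfolding U_def V_def W_def Pr_pt by (rule IH) (use xyz in auto)
    have i7: "diamond (diamond U V) W = diamond U (diamond V W)"
      unfolding U_def V_def W_def by (rule IH) (use xyz in auto)
    have t1: "T1 V W U = T1 U V W"
    proof -
      have a: "diamond (diamond V (Pr W)) (Pr U) = diamond (diamond (Pr U) V) (Pr W)"
        by (subst diamond_comm) (rule i2[symmetric])
      have b: "diamond (diamond (Pr V) W) (Pr U) = diamond (diamond (Pr U) (Pr V)) W"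
        by (subst diamond_comm) (rule i3[symmetric])
      have c: "diamond (diamond (Pr V) (Pr W)) U = diamond (diamond U (Pr V)) (Pr W)"
        by (subst diamond_comm) (rule i1[symmetric])
      show ?thesis unfolding T1_def a b c by (simp add: algebra_simps)
    qed
    have t2: "T2 V W U = T2 U V W"
    proof -
      have a: "diamond (diamond V W) (Pr U) = diamond (diamond (Pr U) V) W"
        by (subst diamond_comm) (rule i6[symmetric])
      have b: "diamond (diamond V (Pr W)) U = diamond (diamond U V) (Pr W)"
        by (subst diamond_comm) (rule i4[symmetric])
      have c: "diamond (diamond (Pr V) W) U = diamond (diamond U (Pr V)) W"
        by (subst diamond_comm) (rule i5[symmetric])
      show ?thesis unfolding T2_def a b c by (simp add: algebra_simps)
    qed
    have t3: "diamond (diamond V W) U = diamond (diamond U V) W"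
      by (subst diamond_comm) (rule i7[symmetric])
    have "diamond (Pr U) (diamond (Pr V) (Pr W)) = diamond (diamond (Pr V) (Pr W)) (Pr U)"
      by (rule diamond_comm)
    also have "\<dots> = Pr (T1 U V W - Pr (T2 U V W) + Pr (Pr (diamond (diamond U V) W)))"
      using Pform[OF sh(2,3,1)] t1 t2 t3 by simp
    finally show ?thesis using Pform[OF sh] by (simp add: U_def V_def W_def)
  qed
  obtain a Y1 where Y1: "(pt [u] :: 'a list list \<Rightarrow>\<^sub>0 'k) = L a Y1" "is_sh Y1" "Y1 = pt [[1]] \<or> (\<exists>u'. u' \<noteq> [] \<and> Y1 = Pr (pt [u']) \<and> length u = Suc (length u'))"
    using decomp[OF less(2)] by blast
  obtain b Y2 where Y2: "(pt [v] :: 'a list list \<Rightarrow>\<^sub>0 'k) = L b Y2" "is_sh Y2" "Y2 = pt [[1]] \<or> (\<exists>u'. u' \<noteq> [] \<and> Y2 = Pr (pt [u']) \<and> length v = Suc (length u'))"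
    using decomp[OF less(3)] by blast
  obtain c Y3 where Y3: "(pt [w] :: 'a list list \<Rightarrow>\<^sub>0 'k) = L c Y3" "is_sh Y3" "Y3 = pt [[1]] \<or> (\<exists>u'. u' \<noteq> [] \<and> Y3 = Pr (pt [u']) \<and> length w = Suc (length u'))"
    using decomp[OF less(4)] by blast
  have "diamond (diamond Y1 Y2) Y3 = diamond Y1 (diamond Y2 Y3)"
  proof (cases "Y1 = pt [[1]] \<or> Y2 = pt [[1]] \<or> Y3 = pt [[1]]")
    case True
    then show ?thesis using Y1(2) Y2(2) Y3(2)
      by (auto simp: unit_left unit_right sh_diamond)
  next
    case False
    then obtain x y z where "x \<noteq> []" "Y1 = Pr (pt [x])" "length u = Suc (length x)"
      "y \<noteq> []" "Y2 = Pr (pt [y])" "length v = Suc (length y)"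
      "z \<noteq> []" "Y3 = Pr (pt [z])" "length w = Suc (length z)"
      using Y1(3) Y2(3) Y3(3) by blast
    then show ?thesis using Pc[of x y z] by simp
  qed
  then show ?case
    unfolding Y1(1) Y2(1) Y3(1) reassoc_L[OF Y1(2) Y2(2) Y3(2)] by simp
qed

lemma diamond_assoc:
  assumes "is_sh x" "is_sh y" "is_sh z"
  shows "diamond (diamond x y) z = diamond x (diamond y z)"
proof -
  have "\<forall>z. is_sh z \<longrightarrow> diamond (diamond x y) z = diamond x (diamond y z)"
    using assms(1,2)[unfolded is_sh_iff]
  proof (induction x y rule: bilin_induct)
    case (sing x y c d)
    then obtain u v where uv: "x = [u]" "y = [v]" "u \<noteq> []" "v \<noteq> []" by (auto simp: SH_def)
    show ?case
    proof (intro allI impI)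
      fix z :: "'a list list \<Rightarrow>\<^sub>0 'b" assume "is_sh z"
      then show "diamond (diamond (smul c (pt x)) (smul d (pt y))) z = diamond (smul c (pt x)) (diamond (smul d (pt y)) z)"
      proof (induction z rule: sh_induct)
        case (sing w e)
        then show ?case using assoc_words[of u v w, where 'k = 'b] uv by (simp add: diamond_lin mult_ac)
      qed (simp_all add: diamond_lin)
    qed
  qed (simp_all add: diamond_lin)
  then show ?thesis using assms(3) by blast
qed




section \<open>epsT is multiplicative\<close>

lemma epsT_prepend: "epsT eps (prepend c p) = eps c * epsT eps p"
proof -
  have "Poly_Mapping.keys p \<subseteq> UNIV" by simp
  then show ?thesis
  proof (induction p rule: lin_induct)
    case (sing x d)
    then show ?case
      by (cases "\<exists>w. x = [w]")
        (auto simp: prepend_lin epsT_lin epsT_pt_other prepend_pt_other epsw_def)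
  qed (simp_all add: prepend_lin epsT_lin algebra_simps)
qed

lemma epsT_dw:
  assumes em: "\<And>a b. eps (a * b) = eps a * eps b" and e1: "eps 1 = 1"
  shows "u \<noteq> [] \<Longrightarrow> v \<noteq> [] \<Longrightarrow> epsT eps (dw u v) = epsw eps u * epsw eps v"
proof (induction u v rule: dw.induct)
  case (4 a c u b d v)
  then show ?case
    by (simp add: epsT_prepend epsT_lin em e1 epsw_def algebra_simps)
qed (simp_all add: epsT_lin em epsw_def algebra_simps)

lemma epsT_diamond:
  assumes em: "\<And>a b. eps (a * b) = eps a * eps b" and e1: "eps 1 = 1"
    and sh: "is_sh x" "is_sh y"
  shows "epsT eps (diamond x y) = epsT eps x * epsT eps y"
  using sh[unfolded is_sh_iff]
proof (induction x y rule: bilin_induct)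
  case (sing x y c d)
  then show ?case
    by (auto simp: SH_def diamond_lin epsT_lin diamond_pt epsT_dw[OF em e1])
qed (simp_all add: diamond_lin epsT_lin algebra_simps)

definition SH2 :: "'a list list set" where "SH2 = {[u, v] | u v. u \<noteq> [] \<and> v \<noteq> []}"

lemma is_sh2_iff: "is_sh2 p \<longleftrightarrow> Poly_Mapping.keys p \<subseteq> SH2"
  by (auto simp: is_sh2_def SH2_def)

lemma sh2_induct[consumes 1, case_names zero sing add]:
  assumes "is_sh2 p" "P 0" "\<And>u v c. u \<noteq> [] \<Longrightarrow> v \<noteq> [] \<Longrightarrow> P (smul c (tens (pt [u]) (pt [v])))"
    "\<And>a b. P a \<Longrightarrow> P b \<Longrightarrow> P (a + b)"
  shows "P p"
  using assms(1)[unfolded is_sh2_iff]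
  by (induction p rule: lin_induct) (use assms(2-) in \<open>auto simp: SH2_def\<close>)

lemma sh2_add: "is_sh2 p \<Longrightarrow> is_sh2 q \<Longrightarrow> is_sh2 (p + q)"
  using keys_add[of p q] by (auto simp: is_sh2_iff)
lemma sh2_diff: "is_sh2 p \<Longrightarrow> is_sh2 q \<Longrightarrow> is_sh2 (p - q)"
  using keys_diff[of p q] by (auto simp: is_sh2_iff)
lemma sh2_smul: "is_sh2 p \<Longrightarrow> is_sh2 (smul c p)"
  using keys_smul[of c p] by (auto simp: is_sh2_iff)
lemma sh2_0: "is_sh2 0" by (simp add: is_sh2_def)

lemma keys_tens: "Poly_Mapping.keys (tens p (q :: _ \<Rightarrow>\<^sub>0 'b::comm_ring_1)) \<subseteq> {I @ J | I J. I \<in> Poly_Mapping.keys p \<and> J \<in> Poly_Mapping.keys q}"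
proof
  fix x assume "x \<in> Poly_Mapping.keys (tens p q)"
  then obtain I J where "I \<in> Poly_Mapping.keys p" "J \<in> Poly_Mapping.keys q" "x \<in> Poly_Mapping.keys (pt (I @ J) :: _ \<Rightarrow>\<^sub>0 'b)"
    using keys_bilin_ext[of "\<lambda>I J. pt (I @ J) :: _ \<Rightarrow>\<^sub>0 'b" p q] unfolding tens_def by blast
  then show "x \<in> {I @ J | I J. I \<in> Poly_Mapping.keys p \<and> J \<in> Poly_Mapping.keys q}" by auto
qed

lemma sh2_tens: assumes "is_sh p" "is_sh q" shows "is_sh2 (tens p q)"
proof -
  have "x \<in> SH2" if x: "x \<in> Poly_Mapping.keys (tens p q)" for x
  proof -
    obtain I J where IJ: "x = I @ J" "I \<in> Poly_Mapping.keys p" "J \<in> Poly_Mapping.keys q"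
      using keys_tens[of p q] x by blast
    obtain u where "I = [u]" "u \<noteq> []" using IJ(2) assms(1) by (auto simp: is_sh_def)
    moreover obtain v where "J = [v]" "v \<noteq> []" using IJ(3) assms(2) by (auto simp: is_sh_def)
    ultimately show ?thesis using IJ(1) by (simp add: SH2_def)
  qed
  then show ?thesis by (auto simp: is_sh2_iff)
qed

lemma keys_tens_dw: "Poly_Mapping.keys (tens (dw u u') (dw v v')) \<subseteq> SH2"
  using sh2_tens[OF sh_dw sh_dw] by (simp add: is_sh2_iff)

lemma sh2_bullet: "is_sh2 (bullet p q)"
proof -
  have "Poly_Mapping.keys (bullet p q) \<subseteq> SH2"
    unfolding bullet_on2
    by (rule keys_bilin_ext_sub) (auto simp: on2_def keys_tens_dw[THEN subsetD] split: list.splits)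
  then show ?thesis by (simp add: is_sh2_iff)
qed

lemma tens_pt2: "tens (pt [u]) (pt [v]) = pt [u, v]" by simp

lemma bullet_tens:
  assumes "is_sh X1" "is_sh X2" "is_sh Y1" "is_sh Y2"
  shows "bullet (tens X1 X2) (tens Y1 Y2) = tens (diamond X1 Y1) (diamond X2 Y2)"
proof -
  have "\<forall>X2 Y2. is_sh X2 \<longrightarrow> is_sh Y2 \<longrightarrow> bullet (tens X1 X2) (tens Y1 Y2) = tens (diamond X1 Y1) (diamond X2 Y2)"
    using assms(1,3)[unfolded is_sh_iff]
  proof (induction X1 Y1 rule: bilin_induct)
    case (sing x y c d)
    then obtain u1 v1 where xy: "x = [u1]" "y = [v1]" by (auto simp: SH_def)
    show ?case
    proof (intro allI impI)
      fix X2 Y2 :: "'a list list \<Rightarrow>\<^sub>0 'b" assume "is_sh X2" "is_sh Y2"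
      then have "Poly_Mapping.keys X2 \<subseteq> SH" "Poly_Mapping.keys Y2 \<subseteq> SH" by (simp_all add: is_sh_iff)
      then show "bullet (tens (smul c (pt x)) X2) (tens (smul d (pt y)) Y2) = tens (diamond (smul c (pt x)) (smul d (pt y))) (diamond X2 Y2)"
      proof (induction X2 Y2 rule: bilin_induct)
        case (sing x' y' c' d')
        then show ?case by (auto simp: SH_def xy tens_lin bullet_lin diamond_lin diamond_pt mult_ac)
      qed (simp_all add: tens_lin bullet_lin diamond_lin smul_add)
    qed
  qed (simp_all add: tens_lin bullet_lin diamond_lin)
  then show ?thesis using assms(2,4) by blast
qed

lemma bullet_comm: "is_sh2 p \<Longrightarrow> is_sh2 q \<Longrightarrow> bullet p q = bullet q p"
proof -
  assume "is_sh2 p" "is_sh2 q"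
  then have "Poly_Mapping.keys p \<subseteq> SH2" "Poly_Mapping.keys q \<subseteq> SH2" by (simp_all add: is_sh2_iff)
  then show ?thesis
  proof (induction p q rule: bilin_induct)
    case (sing x y c d)
    then show ?case by (auto simp: SH2_def bullet_lin dw_comm mult.commute)
  qed (simp_all add: bullet_lin)
qed

lemma bullet_assoc:
  assumes "is_sh2 p" "is_sh2 q" "is_sh2 r"
  shows "bullet (bullet p q) r = bullet p (bullet q r)"
proof -
  have "\<forall>r. is_sh2 r \<longrightarrow> bullet (bullet p q) r = bullet p (bullet q r)"
    using assms(1,2)[unfolded is_sh2_iff]
  proof (induction p q rule: bilin_induct)
    case (sing x y c d)
    then obtain u1 u2 v1 v2 where xy: "x = [u1, u2]" "y = [v1, v2]" "u1 \<noteq> []" "u2 \<noteq> []" "v1 \<noteq> []" "v2 \<noteq> []"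
      by (auto simp: SH2_def)
    show ?case
    proof (intro allI impI)
      fix r :: "'a list list \<Rightarrow>\<^sub>0 'b" assume "is_sh2 r"
      then show "bullet (bullet (smul c (pt x)) (smul d (pt y))) r = bullet (smul c (pt x)) (bullet (smul d (pt y)) r)"
      proof (induction r rule: sh2_induct)
        case (sing w1 w2 e)
        have "bullet (bullet (pt [u1, u2] :: 'a list list \<Rightarrow>\<^sub>0 'b) (pt [v1, v2])) (pt [w1, w2]) = bullet (pt [u1, u2]) (bullet (pt [v1, v2]) (pt [w1, w2]))"
          using xy sing
          by (simp del: bullet_pt tens_pt add: tens_pt2[symmetric] bullet_tens sh_pt sh_diamond diamond_assoc)
        then show ?case by (simp add: xy bullet_lin tens_lin mult_ac del: bullet_pt)
      qed (simp_all add: bullet_lin)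
    qed
  qed (simp_all add: bullet_lin)
  then show ?thesis using assms(3) by blast
qed

lemma dw_one_left: "u \<noteq> [] \<Longrightarrow> dw [1] u = pt [u]"
  by (simp add: dw_single_left)

lemma bullet_unit: "is_sh2 q \<Longrightarrow> bullet (pt [[1], [1]]) q = q"
  by (induction q rule: sh2_induct) (simp_all add: bullet_lin tens_lin dw_one_left)

lemma id_Pr_tens: "is_sh X \<Longrightarrow> is_sh Y \<Longrightarrow> id_Pr (tens X Y) = tens X (Pr Y)"
proof -
  assume "is_sh X" "is_sh Y"
  then have "Poly_Mapping.keys X \<subseteq> SH" "Poly_Mapping.keys Y \<subseteq> SH" by (simp_all add: is_sh_iff)
  then show ?thesis
  proof (induction X Y rule: bilin_induct)
    case (sing x y c d)
    then show ?case by (auto simp: SH_def id_Pr_lin tens_lin Pr_lin)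
  qed (simp_all add: id_Pr_lin tens_lin Pr_lin)
qed

lemma sh2_pt: "u \<noteq> [] \<Longrightarrow> v \<noteq> [] \<Longrightarrow> is_sh2 (pt [u, v])"
  by (simp add: is_sh2_def)

lemma sh2_id_Pr: "is_sh2 p \<Longrightarrow> is_sh2 (id_Pr p)"
  by (induction p rule: sh2_induct) (simp_all add: id_Pr_lin sh2_add sh2_smul sh2_0 sh2_pt)

lemma nij_pt: "u \<noteq> [] \<Longrightarrow> v \<noteq> [] \<Longrightarrow> diamond (pt [1 # u]) (pt [1 # v]) =
   Pr (diamond (pt [u]) (pt [1 # v]) + diamond (pt [1 # u]) (pt [v]) - Pr (diamond (pt [u]) (pt [v])))"
  by (simp add: diamond_pt dw_eqs Pr_def)

lemma id_Pr_nij: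
  assumes "is_sh2 X" "is_sh2 Y"
  shows "bullet (id_Pr X) (id_Pr Y) = id_Pr (bullet X (id_Pr Y) + bullet (id_Pr X) Y - id_Pr (bullet X Y))"
proof -
  have "Poly_Mapping.keys X \<subseteq> SH2" "Poly_Mapping.keys Y \<subseteq> SH2" using assms by (simp_all add: is_sh2_iff)
  then show ?thesis
  proof (induction X Y rule: bilin_induct)
    case (sing x y c d)
    then obtain u1 u2 v1 v2 where xy: "x = [u1, u2]" "y = [v1, v2]" "u1 \<noteq> []" "u2 \<noteq> []" "v1 \<noteq> []" "v2 \<noteq> []"
      by (auto simp: SH2_def)
    have sh: "is_sh (pt [u1] :: 'a list list \<Rightarrow>\<^sub>0 'b)" "is_sh (pt [u2] :: 'a list list \<Rightarrow>\<^sub>0 'b)" "is_sh (pt [v1] :: 'a list list \<Rightarrow>\<^sub>0 'b)" "is_sh (pt [v2] :: 'a list list \<Rightarrow>\<^sub>0 'b)" using xy by (simp_all add: sh_pt)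
    have "bullet (id_Pr (pt x :: 'a list list \<Rightarrow>\<^sub>0 'b)) (id_Pr (pt y)) = id_Pr (bullet (pt x) (id_Pr (pt y)) + bullet (id_Pr (pt x)) (pt y) - id_Pr (bullet (pt x) (pt y)))"
      unfolding xy tens_pt2[symmetric]
      using sh xy
      by (simp del: bullet_pt tens_pt add: sh_pt id_Pr_tens bullet_tens sh_Pr sh_diamond nij_pt Pr_lin
           tens_lin id_Pr_lin sh_NN sh_diff sh_add)
    then show ?case by (simp add: bullet_lin id_Pr_lin mult_ac smul_add smul_diff del: bullet_pt tens_pt id_Pr_pt)
  next
    case (add1 a b q) then show ?case by (simp add: bullet_lin id_Pr_lin algebra_simps)
  next
    case (add2 a b p) then show ?case by (simp add: bullet_lin id_Pr_lin algebra_simps)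
  qed (simp_all add: bullet_lin id_Pr_lin)
qed





definition K1 :: "'a list list set" where "K1 = {[[z], v] | z v. v \<noteq> []}"
definition D1set :: "'a list list set" where "D1set = {[[x], [y]] | x y. True}"

definition catk :: "'a list list \<Rightarrow> 'a list list \<Rightarrow> ('a list list \<Rightarrow>\<^sub>0 'k::comm_ring_1)" where
  "catk I J = on1 (\<lambda>u. on1 (\<lambda>v. pt [u @ v]) J) I"
definition cat :: "('a list list \<Rightarrow>\<^sub>0 'k::comm_ring_1) \<Rightarrow> ('a list list \<Rightarrow>\<^sub>0 'k) \<Rightarrow> ('a list list \<Rightarrow>\<^sub>0 'k)" where
  "cat p q = bilin_ext catk p q"

lemma cat_pt[simp]: "cat (pt [u]) (pt [v]) = pt [u @ v]"
  by (simp add: cat_def catk_def)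

lemma cat_lin: "cat (p + p') q = cat p q + cat p' q" "cat p (q + q') = cat p q + cat p q'"
  "cat (smul c p) q = smul c (cat p q)" "cat p (smul c q) = smul c (cat p q)" "cat 0 q = 0" "cat p 0 = 0"
  by (simp_all add: cat_def bilin_ext_lin)

lemma teq_cat: "teq sc p p' \<Longrightarrow> teq sc q q' \<Longrightarrow> teq sc (cat p q) (cat p' q')"
  unfolding cat_def catk_def
proof (rule teq_bilin)
  fix J show "mlk sc (\<lambda>I. on1 (\<lambda>u. on1 (\<lambda>v. pt [u @ v]) J) I)"
    by (intro mlk_on1 mlw_on1_param) (use mlw_pt[of sc "[]" "[]" _ "[]"] in simp)
next
  fix I show "mlk sc (\<lambda>J. on1 (\<lambda>u. on1 (\<lambda>v. pt [u @ v]) J) I)"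
    by (intro mlk_on1_param mlk_on1) (use mlw_pt[of sc "[]" _ "[]" "[]"] in simp)
qed

definition on3 :: "('a list \<Rightarrow> 'a list \<Rightarrow> 'a list \<Rightarrow> ('b \<Rightarrow>\<^sub>0 'k::zero)) \<Rightarrow> 'a list list \<Rightarrow> ('b \<Rightarrow>\<^sub>0 'k)" where
  "on3 h I = (case I of [a, b, c] \<Rightarrow> h a b c | _ \<Rightarrow> 0)"

lemma on3_three[simp]: "on3 h [a, b, c] = h a b c" by (simp add: on3_def)
lemma on3_other: "(\<And>a b c. I \<noteq> [a, b, c]) \<Longrightarrow> on3 h I = 0" by (auto simp: on3_def split: list.splits)

lemma len2_cases: "length xs = 2 \<Longrightarrow> \<exists>a b. xs = [a, b]"
  by (cases xs; cases "tl xs") auto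
lemma len1_cases: "length xs = 1 \<Longrightarrow> \<exists>a. xs = [a]"
  by (cases xs) auto

lemma three_block_cases:
  obtains b c where "Bs = []" "Cs = [b, c]" | a c where "Bs = [a]" "Cs = [c]" | a b where "Bs = [a, b]" "Cs = []"
    | "\<forall>Z a b c. Bs @ [Z] @ Cs \<noteq> [a, b, c]"
proof -
  show ?thesis
  proof (cases "length Bs + length Cs = 2")
    case True
    then consider "length Bs = 0" "length Cs = 2" | "length Bs = 1" "length Cs = 1" | "length Bs = 2" "length Cs = 0"
      by linarith
    then show ?thesis
    proof cases
      case 1 then show ?thesis using that(1) len2_cases[of Cs] by auto
    next
      case 2 then show ?thesis using that(2) len1_cases[of Bs] len1_cases[of Cs] by auto
    next
      case 3 then show ?thesis using that(3) len2_cases[of Bs] by auto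
    qed
  next
    case False
    have "Bs @ [Z] @ Cs \<noteq> [a, b, c]" for Z a b c
    proof
      assume "Bs @ [Z] @ Cs = [a, b, c]"
      then have "length (Bs @ [Z] @ Cs) = 3" by simp
      then show False using False by simp
    qed
    then show ?thesis using that(4) by blast
  qed
qed

lemma mlk_on3:
  assumes "\<And>b c. mlw sc (\<lambda>a. h a b c)" "\<And>a c. mlw sc (\<lambda>b. h a b c)" "\<And>a b. mlw sc (h a b)"
  shows "mlk sc (on3 h)"
proof -
  have z: "on3 h I = 0" if "\<forall>a b c. I \<noteq> [a, b, c]" for I using that by (simp add: on3_other)
  show ?thesis unfolding mlk_def
  proof (intro conjI allI)
    fix Bs u a b v Cs
    show "teq sc (on3 h (Bs @ [u @ [a + b] @ v] @ Cs)) (on3 h (Bs @ [u @ [a] @ v] @ Cs) + on3 h (Bs @ [u @ [b] @ v] @ Cs))"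
      by (cases Bs Cs rule: three_block_cases) (use assms z in \<open>auto simp: mlw_def\<close>)
  next
    fix Bs u c a v Cs
    show "teq sc (on3 h (Bs @ [u @ [sc c a] @ v] @ Cs)) (smul c (on3 h (Bs @ [u @ [a] @ v] @ Cs)))"
      by (cases Bs Cs rule: three_block_cases) (use assms z in \<open>auto simp: mlw_def\<close>)
  qed
qed

lemma mlw_on3_param: "(\<And>v v' v''. mlw sc (\<lambda>u. g u v v' v'')) \<Longrightarrow> mlw sc (\<lambda>u. on3 (g u) J)"
  by (cases "\<exists>w w' w''. J = [w, w', w'']") (auto simp: on3_other mlw_zero)
lemma mlk_on3_param: "(\<And>a b c. mlk sc (G a b c)) \<Longrightarrow> mlk sc (\<lambda>J. on3 (\<lambda>a b c. G a b c J) I)"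
  by (cases "\<exists>w w' w''. I = [w, w', w'']") (auto simp: on3_other mlk_zero)

definition t3k :: "'a::comm_ring_1 list list \<Rightarrow> 'a list list \<Rightarrow> ('a list list \<Rightarrow>\<^sub>0 'k::comm_ring_1)" where
  "t3k I J = on3 (\<lambda>A B C. on3 (\<lambda>A' B' C'. tens (tens (dw A A') (dw B B')) (pt [C @ C'])) J) I"
definition T3 :: "('a::comm_ring_1 list list \<Rightarrow>\<^sub>0 'k::comm_ring_1) \<Rightarrow> ('a list list \<Rightarrow>\<^sub>0 'k) \<Rightarrow> ('a list list \<Rightarrow>\<^sub>0 'k)" where
  "T3 p q = bilin_ext t3k p q"

lemma T3_pt[simp]: "T3 (pt [A, B, C]) (pt [A', B', C']) = tens (tens (dw A A') (dw B B')) (pt [C @ C'])"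
  by (simp add: T3_def t3k_def)

lemma T3_lin: "T3 (p + p') q = T3 p q + T3 p' q" "T3 p (q + q') = T3 p q + T3 p q'"
  "T3 (smul c p) q = smul c (T3 p q)" "T3 p (smul c q) = smul c (T3 p q)" "T3 0 q = 0" "T3 p 0 = 0"
  by (simp_all add: T3_def bilin_ext_lin)

lemma mlw_pt_app: "mlw sc (\<lambda>w. pt [w @ v])" "mlw sc (\<lambda>w. pt [u @ w])"
  using mlw_pt[of sc "[]" "[]" v "[]"] mlw_pt[of sc "[]" u "[]" "[]"] by simp_all

lemma teq_T3: assumes "k_algebra sc" "teq sc p p'" "teq sc q q'" shows "teq sc (T3 p q) (T3 p' q')"
  unfolding T3_def t3k_def
proof (rule teq_bilin[OF _ _ assms(2,3)])
  fix J show "mlk sc (\<lambda>I. on3 (\<lambda>A B C. on3 (\<lambda>A' B' C'. tens (tens (dw A A') (dw B B')) (pt [C @ C'])) J) I)"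
    by (intro mlk_on3 mlw_on3_param mlw_tens1 mlw_tens2 dw_mlw1 assms(1) mlw_pt_app)
next
  fix I show "mlk sc (\<lambda>J. on3 (\<lambda>A B C. on3 (\<lambda>A' B' C'. tens (tens (dw A A') (dw B B')) (pt [C @ C'])) J) I)"
    by (intro mlk_on3_param mlk_on3 mlw_tens1 mlw_tens2 dw_mlw2 assms(1) mlw_pt_app)
qed

lemma T3_tens_left:
  assumes "is_sh2 P" "is_sh2 Q"
  shows "T3 (tens P (pt [C])) (tens Q (pt [C'])) = tens (bullet P Q) (pt [C @ C'])"
  using assms[unfolded is_sh2_iff]
proof (induction P Q rule: bilin_induct)
  case (sing x y c d)
  then show ?case by (auto simp: SH2_def tens_lin T3_lin bullet_lin)
qed (simp_all add: tens_lin T3_lin bullet_lin)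

lemma T3_tens_right:
  assumes "Poly_Mapping.keys P \<subseteq> D1set" "Poly_Mapping.keys Q \<subseteq> K1"
  shows "T3 (tens (pt [[x]]) P) (tens (pt [[z]]) Q) = tens (pt [[x * z]]) (bullet P (id_Pr Q))"
  using assms
proof (induction P Q rule: bilin_induct)
  case (sing p q c d)
  then show ?case by (auto simp: D1set_def K1_def tens_lin T3_lin bullet_lin id_Pr_lin dw_eqs)
qed (simp_all add: tens_lin T3_lin bullet_lin id_Pr_lin)

lemma keys_bullet_K1:
  assumes "Poly_Mapping.keys p \<subseteq> D1set" "Poly_Mapping.keys q \<subseteq> K1"
  shows "Poly_Mapping.keys (bullet p (id_Pr q)) \<subseteq> K1"
  using assms
proof (induction p q rule: bilin_induct)
  case (sing p q c d)
  then show ?case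
    by (auto simp: D1set_def K1_def bullet_lin id_Pr_lin dw_eqs dest!: keys_smul[THEN subsetD])
next
  case (add1 a b q) then show ?case using keys_add[of "bullet a (id_Pr q)" "bullet b (id_Pr q)"] by (auto simp: bullet_lin id_Pr_lin)
next
  case (add2 a b p) then show ?case using keys_add[of "bullet p (id_Pr a)" "bullet p (id_Pr b)"] by (auto simp: bullet_lin id_Pr_lin)
qed (simp_all add: bullet_lin id_Pr_lin)

context
  fixes sc :: "'k::comm_ring_1 \<Rightarrow> 'a::comm_ring_1 \<Rightarrow> 'a"
    and Delta :: "'a \<Rightarrow> ('a list list \<Rightarrow>\<^sub>0 'k)"
    and eps :: "'a \<Rightarrow> 'k"
  assumes bialg: "lc_bialgebra sc Delta eps"
begin

lemma ka: "k_algebra sc" using bialg by (simp add: lc_bialgebra_def)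
lemma keysD: "Poly_Mapping.keys (Delta a) \<subseteq> {[[x], [y]] | x y. True}" using bialg by (simp add: lc_bialgebra_def)
lemma Dadd: "teq sc (Delta (a + b)) (Delta a + Delta b)" using bialg by (simp add: lc_bialgebra_def)
lemma Dsc: "teq sc (Delta (sc c a)) (smul c (Delta a))" using bialg by (simp add: lc_bialgebra_def)
lemma Dmul: "teq sc (Delta (a * b)) (bullet (Delta a) (Delta b))" using bialg by (simp add: lc_bialgebra_def)
lemma D1: "teq sc (Delta 1) (pt [[1], [1]])" using bialg by (simp add: lc_bialgebra_def)
lemma Dcoass: "teq sc (tmap_left (lift1 Delta) (Delta a)) (tmap_right (lift1 Delta) (Delta a))" using bialg by (simp add: lc_bialgebra_def)
lemma eadd: "eps (a + b) = eps a + eps b" using bialg by (simp add: lc_bialgebra_def)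
lemma esc: "eps (sc c a) = c * eps a" using bialg by (simp add: lc_bialgebra_def)
lemma emul: "eps (a * b) = eps a * eps b" using bialg by (simp add: lc_bialgebra_def)
lemma e1: "eps 1 = 1" using bialg by (simp add: lc_bialgebra_def)
lemma Dcounit: "teq sc (counit_left (epsw eps) (Delta a)) (pt [[a]])" using bialg by (simp add: lc_bialgebra_def)

lemma sh2_Delta: "is_sh2 (Delta a)"
  using keysD[of a] by (auto simp: is_sh2_def)

lemma DTw_cons: "w \<noteq> [] \<Longrightarrow> DTw Delta (a # w) = bullet (Delta a) (id_Pr (DTw Delta w))"
  by (cases w) auto

lemma sh2_DTw: "is_sh2 (DTw Delta w)"
proof (cases w)
  case (Cons a w')
  then show ?thesis by (cases w') (auto simp: sh2_Delta sh2_bullet)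
qed (simp add: sh2_0)

lemma sh2_DeltaT: "is_sh2 (DeltaT Delta x)"
  unfolding DeltaT_on1 is_sh2_iff
  by (rule keys_lin_ext_sub) (auto simp: on1_def sh2_DTw[unfolded is_sh2_iff, THEN subsetD] split: list.splits)

lemma DTw_lin_aux:
  "teq sc (DTw Delta (u1 @ [x + y] @ u2)) (DTw Delta (u1 @ [x] @ u2) + DTw Delta (u1 @ [y] @ u2)) \<and>
   teq sc (DTw Delta (u1 @ [sc c x] @ u2)) (smul c (DTw Delta (u1 @ [x] @ u2)))"
proof (induction u1)
  case Nil
  show ?case
  proof (cases "u2 = []")
    case True then show ?thesis using Dadd Dsc by simp
  next
    case False
    then show ?thesis
      using teq_bullet[OF ka Dadd teq_refl, of x y "id_Pr (DTw Delta u2)"]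
        teq_bullet[OF ka Dsc teq_refl, of c x "id_Pr (DTw Delta u2)"]
      by (simp add: DTw_cons bullet_lin)
  qed
next
  case (Cons z u1')
  have ne: "u1' @ [t] @ u2 \<noteq> []" for t by simp
  show ?case
    using teq_bullet[OF ka teq_refl teq_id_Pr[OF conjunct1[OF Cons]], of "Delta z"]
      teq_bullet[OF ka teq_refl teq_id_Pr[OF conjunct2[OF Cons]], of "Delta z"]
    by (simp add: DTw_cons bullet_lin id_Pr_lin)
qed

lemma DTw_mlw: "mlw sc (DTw Delta)"
  unfolding mlw_def using DTw_lin_aux by blast

lemma teq_DeltaT: "teq sc p q \<Longrightarrow> teq sc (DeltaT Delta p) (DeltaT Delta q)"
  unfolding DeltaT_on1 by (rule teq_lin_ext[OF mlk_on1[OF DTw_mlw]])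

lemma DeltaT_prepend: "is_sh X \<Longrightarrow> DeltaT Delta (prepend c X) = bullet (Delta c) (id_Pr (DeltaT Delta X))"
  by (induction X rule: sh_induct) (simp_all add: DeltaT_lin prepend_lin bullet_lin id_Pr_lin DTw_cons)

lemma bullet_D1: "is_sh2 q \<Longrightarrow> teq sc (bullet (Delta 1) q) q"
  by (rule teq_trans[OF teq_bullet[OF ka D1 teq_refl]]) (simp add: bullet_unit)

lemma cocycle: "is_sh X \<Longrightarrow> teq sc (DeltaT Delta (Pr X)) (id_Pr (DeltaT Delta X))"
  unfolding Pr_def by (simp add: DeltaT_prepend bullet_D1 sh2_id_Pr sh2_DeltaT)

lemma cocycle_w: "w \<noteq> [] \<Longrightarrow> teq sc (DTw Delta (1 # w)) (id_Pr (DTw Delta w))"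
  by (simp add: DTw_cons bullet_D1 sh2_id_Pr sh2_DTw)


lemma bullet_swap4:
  assumes "is_sh2 A" "is_sh2 B" "is_sh2 C" "is_sh2 E"
  shows "bullet (bullet A B) (bullet C E) = bullet (bullet A C) (bullet B E)"
proof -
  have "bullet (bullet A B) (bullet C E) = bullet A (bullet B (bullet C E))"
    using assms by (simp add: bullet_assoc sh2_bullet)
  also have "bullet B (bullet C E) = bullet C (bullet B E)"
    using assms by (metis bullet_assoc bullet_comm)
  also have "bullet A (bullet C (bullet B E)) = bullet (bullet A C) (bullet B E)"
    using assms by (simp add: bullet_assoc sh2_bullet)
  finally show ?thesis .
qed

lemma hom_case2: "v' \<noteq> [] \<Longrightarrow> teq sc (DeltaT Delta (dw [a] (b # v'))) (bullet (DTw Delta [a]) (DTw Delta (b # v')))"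
proof -
  assume v': "v' \<noteq> []"
  have "DeltaT Delta (dw [a] (b # v')) = bullet (Delta (a * b)) (id_Pr (DTw Delta v'))"
    using v' by (simp add: dw_eqs DTw_cons)
  also have "teq sc \<dots> (bullet (bullet (Delta a) (Delta b)) (id_Pr (DTw Delta v')))"
    by (rule teq_bullet[OF ka Dmul teq_refl])
  also have "\<dots> = bullet (Delta a) (bullet (Delta b) (id_Pr (DTw Delta v')))"
    by (simp add: bullet_assoc sh2_Delta sh2_id_Pr sh2_DTw)
  also have "\<dots> = bullet (DTw Delta [a]) (DTw Delta (b # v'))"
    using v' by (simp add: DTw_cons)
  finally show ?thesis .
qed

lemma hom_words: "u \<noteq> [] \<Longrightarrow> v \<noteq> [] \<Longrightarrow> teq sc (DeltaT Delta (dw u v)) (bullet (DTw Delta u) (DTw Delta v))"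
proof (induction "length u + length v" arbitrary: u v rule: less_induct)
  case less
  obtain a u' where u: "u = a # u'" using less.prems(1) by (cases u) auto
  obtain b v' where v: "v = b # v'" using less.prems(2) by (cases v) auto
  show ?case
  proof (cases "u' = []"; cases "v' = []")
    assume "u' = []" "v' = []"
    then show ?thesis using Dmul by (simp add: u v dw_eqs)
  next
    assume "u' = []" "v' \<noteq> []"
    then show ?thesis using hom_case2 by (simp add: u v)
  next
    assume "u' \<noteq> []" "v' = []"
    then show ?thesis using hom_case2[of u' b a] bullet_comm[OF sh2_Delta[of b] sh2_DTw[of "a # u'"]]
      by (simp add: u v dw_comm)
  next
    assume u'ne: "u' \<noteq> []" and v'ne: "v' \<noteq> []"
    define X where "X = DTw Delta u'"
    define Y where "Y = DTw Delta v'"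
    define S :: "'a list list \<Rightarrow>\<^sub>0 'k" where "S = dw u' (1 # v') + dw (1 # u') v' - prepend 1 (dw u' v')"
    have shS: "is_sh S" by (simp add: S_def sh_intros)
    have sh2: "is_sh2 X" "is_sh2 Y" by (simp_all add: X_def Y_def sh2_DTw)
    have t1: "teq sc (DeltaT Delta (dw u' (1 # v'))) (bullet X (id_Pr Y))"
      using less.hyps[of u' "1 # v'"] u'ne v'ne u v
      by (auto simp: X_def Y_def intro: teq_trans teq_bullet[OF ka teq_refl cocycle_w])
    have t2: "teq sc (DeltaT Delta (dw (1 # u') v')) (bullet (id_Pr X) Y)"
      using less.hyps[of "1 # u'" v'] u'ne v'ne u v
      by (auto simp: X_def Y_def intro: teq_trans teq_bullet[OF ka cocycle_w teq_refl])
    have t3: "teq sc (DeltaT Delta (prepend 1 (dw u' v'))) (id_Pr (bullet X Y))"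
      using cocycle[OF sh_dw, of u' v', unfolded Pr_def] teq_id_Pr[OF less.hyps[of u' v']] u'ne v'ne u v
      by (auto simp: X_def Y_def intro: teq_trans)
    have tS: "teq sc (DeltaT Delta S) (bullet X (id_Pr Y) + bullet (id_Pr X) Y - id_Pr (bullet X Y))"
      unfolding S_def DeltaT_lin by (intro teq_add teq_diff t1 t2 t3)
    have "DeltaT Delta (dw u v) = bullet (Delta (a * b)) (id_Pr (DeltaT Delta S))"
      using u'ne v'ne by (simp add: u v dw_eqs S_def[symmetric] DeltaT_prepend shS)
    also have "teq sc \<dots> (bullet (bullet (Delta a) (Delta b)) (id_Pr (bullet X (id_Pr Y) + bullet (id_Pr X) Y - id_Pr (bullet X Y))))"
      by (rule teq_bullet[OF ka Dmul teq_id_Pr[OF tS]])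
    also have "\<dots> = bullet (bullet (Delta a) (Delta b)) (bullet (id_Pr X) (id_Pr Y))"
      using sh2 by (simp add: id_Pr_nij)
    also have "\<dots> = bullet (bullet (Delta a) (id_Pr X)) (bullet (Delta b) (id_Pr Y))"
      using sh2 by (simp add: bullet_swap4 sh2_Delta sh2_id_Pr)
    also have "\<dots> = bullet (DTw Delta u) (DTw Delta v)"
      using u'ne v'ne by (simp add: u v X_def Y_def DTw_cons)
    finally show ?thesis .
  qed
qed

lemma DeltaT_hom: assumes "is_sh x" "is_sh y"
  shows "teq sc (DeltaT Delta (diamond x y)) (bullet (DeltaT Delta x) (DeltaT Delta y))"
  using assms[unfolded is_sh_iff]
proof (induction x y rule: bilin_induct)
  case (sing x y c d)
  then obtain u v where "x = [u]" "y = [v]" "u \<noteq> []" "v \<noteq> []" by (auto simp: SH_def)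
  then show ?case
    by (simp add: diamond_lin DeltaT_lin bullet_lin diamond_pt) (intro teq_smul hom_words)
next
  case (add1 a b q) then show ?case by (simp add: diamond_lin DeltaT_lin bullet_lin teq_add)
next
  case (add2 a b p) then show ?case by (simp add: diamond_lin DeltaT_lin bullet_lin teq_add)
qed (simp_all add: diamond_lin DeltaT_lin bullet_lin)

lemma counit_bullet:
  assumes "Poly_Mapping.keys p \<subseteq> D1set" "Poly_Mapping.keys q \<subseteq> K1"
  shows "counit_left (epsw eps) (bullet p (id_Pr q)) = cat (counit_left (epsw eps) p) (counit_left (epsw eps) q)"
  using assms
proof (induction p q rule: bilin_induct)
  case (sing p q c d)
  then show ?case by (auto simp: D1set_def K1_def bullet_lin id_Pr_lin dw_eqs counit_left_lin cat_lin epsw_def emul mult_ac)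
qed (simp_all add: bullet_lin id_Pr_lin counit_left_lin cat_lin)


lemma keysD1: "Poly_Mapping.keys (Delta a) \<subseteq> D1set"
  using keysD[of a] by (simp add: D1set_def)

lemma keys_DTw: "w \<noteq> [] \<Longrightarrow> Poly_Mapping.keys (DTw Delta w) \<subseteq> K1"
proof (induction w)
  case (Cons a w')
  show ?case
  proof (cases "w' = []")
    case True then show ?thesis using keysD[of a] by (auto simp: K1_def)
  next
    case False then show ?thesis using Cons keys_bullet_K1[OF keysD1] by (simp add: DTw_cons)
  qed
qed simp

lemma counit_words: "w \<noteq> [] \<Longrightarrow> teq sc (counit_left (epsw eps) (DTw Delta w)) (pt [w])"
proof (induction w)
  case (Cons a w')
  show ?case
  proof (cases "w' = []")
    case True then show ?thesis using Dcounit by simp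
  next
    case False
    then have "counit_left (epsw eps) (DTw Delta (a # w')) = cat (counit_left (epsw eps) (Delta a)) (counit_left (epsw eps) (DTw Delta w'))"
      by (simp add: DTw_cons counit_bullet keysD1 keys_DTw)
    also have "teq sc \<dots> (cat (pt [[a]]) (pt [w']))"
      using Cons False by (intro teq_cat Dcounit) auto
    finally show ?thesis by simp
  qed
qed simp

lemma counit_sh: "is_sh x \<Longrightarrow> teq sc (counit_left (epsw eps) (DeltaT Delta x)) x"
  by (induction x rule: sh_induct) (auto simp: counit_left_lin DeltaT_lin counit_words intro: teq_add teq_smul)

lemma lemmaA:
  assumes "Poly_Mapping.keys p \<subseteq> D1set" "Poly_Mapping.keys q \<subseteq> K1"
  shows "teq sc (tmap_left (DTw Delta) (bullet p (id_Pr q))) (T3 (tmap_left (lift1 Delta) p) (tmap_left (DTw Delta) q))"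
  using assms
proof (induction p q rule: bilin_induct)
  case (sing p q c d)
  then obtain x y z v where pq: "p = [[x], [y]]" "q = [[z], v]" "v \<noteq> []" by (auto simp: D1set_def K1_def)
  have "tmap_left (DTw Delta) (bullet (pt p) (id_Pr (pt q))) = tens (Delta (x * z)) (pt [y # v])"
    using pq by (simp add: dw_eqs)
  also have "teq sc \<dots> (tens (bullet (Delta x) (Delta z)) (pt [[y] @ v]))"
    by (simp add: teq_tens Dmul)
  also have "\<dots> = T3 (tmap_left (lift1 Delta) (pt p)) (tmap_left (DTw Delta) (pt q))"
    using pq by (simp add: lift1_def T3_tens_left sh2_Delta del: tens_pt)
  finally show ?case
    by (simp add: bullet_lin id_Pr_lin tmap_left_lin T3_lin) (intro teq_smul)
next
  case (add1 a b q) then show ?case by (simp add: bullet_lin id_Pr_lin tmap_left_lin T3_lin teq_add)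
next
  case (add2 a b p) then show ?case by (simp add: bullet_lin id_Pr_lin tmap_left_lin T3_lin teq_add)
qed (simp_all add: bullet_lin id_Pr_lin tmap_left_lin T3_lin)

lemma lemmaB:
  assumes "Poly_Mapping.keys p \<subseteq> D1set" "Poly_Mapping.keys q \<subseteq> K1"
  shows "tmap_right (DTw Delta) (bullet p (id_Pr q)) = T3 (tmap_right (lift1 Delta) p) (tmap_right (DTw Delta) q)"
  using assms
proof (induction p q rule: bilin_induct)
  case (sing p q c d)
  then obtain x y z v where pq: "p = [[x], [y]]" "q = [[z], v]" "v \<noteq> []" by (auto simp: D1set_def K1_def)
  have "tmap_right (DTw Delta) (bullet (pt p) (id_Pr (pt q))) = T3 (tmap_right (lift1 Delta) (pt p)) (tmap_right (DTw Delta) (pt q))"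
    using pq by (simp add: dw_eqs lift1_def T3_tens_right keysD1 keys_DTw DTw_cons tens_pt2 del: tens_pt)
  then show ?case
    by (simp add: bullet_lin id_Pr_lin tmap_right_lin T3_lin)
qed (simp_all add: bullet_lin id_Pr_lin tmap_right_lin T3_lin)

lemma tmap_lift1_left: "tmap_left (DTw Delta) (Delta a) = tmap_left (lift1 Delta) (Delta a)"
  unfolding tmap_left_on2 using keysD[of a] by (intro lin_ext_cong) (auto simp: lift1_def)
lemma tmap_lift1_right: "tmap_right (DTw Delta) (Delta a) = tmap_right (lift1 Delta) (Delta a)"
  unfolding tmap_right_on2 using keysD[of a] by (intro lin_ext_cong) (auto simp: lift1_def)

lemma coassoc_words: "w \<noteq> [] \<Longrightarrow> teq sc (tmap_left (DTw Delta) (DTw Delta w)) (tmap_right (DTw Delta) (DTw Delta w))"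
proof (induction w)
  case (Cons a w')
  show ?case
  proof (cases "w' = []")
    case True then show ?thesis using Dcoass by (simp add: tmap_lift1_left tmap_lift1_right)
  next
    case False
    have "tmap_left (DTw Delta) (DTw Delta (a # w')) = tmap_left (DTw Delta) (bullet (Delta a) (id_Pr (DTw Delta w')))"
      using False by (simp add: DTw_cons)
    also have "teq sc \<dots> (T3 (tmap_left (lift1 Delta) (Delta a)) (tmap_left (DTw Delta) (DTw Delta w')))"
      using False by (intro lemmaA keysD1 keys_DTw)
    also have "teq sc \<dots> (T3 (tmap_right (lift1 Delta) (Delta a)) (tmap_right (DTw Delta) (DTw Delta w')))"
      using Cons False by (intro teq_T3 ka Dcoass) auto
    also have "\<dots> = tmap_right (DTw Delta) (DTw Delta (a # w'))"
      using False by (simp add: DTw_cons lemmaB keysD1 keys_DTw)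
    finally show ?thesis .
  qed
qed simp

lemma coassoc_sh: "is_sh x \<Longrightarrow> teq sc (tmap_left (DTw Delta) (DeltaT Delta x)) (tmap_right (DTw Delta) (DeltaT Delta x))"
  by (induction x rule: sh_induct) (auto simp: tmap_left_lin tmap_right_lin DeltaT_lin coassoc_words intro: teq_add teq_smul)

end



lemma null_teq0: "nullT sc p \<longleftrightarrow> teq sc p 0" by (simp add: teq_def)

theorem theorem3p8:
  fixes sc :: "'k::comm_ring_1 \<Rightarrow> 'a::comm_ring_1 \<Rightarrow> 'a"
    and Delta :: "'a \<Rightarrow> ('a list list \<Rightarrow>\<^sub>0 'k)"
    and eps :: "'a \<Rightarrow> 'k"
  assumes bialg: "lc_bialgebra sc Delta eps"
  shows
    "(\<forall>x y. is_sh x \<and> is_sh y \<and> nullT sc x \<longrightarrow> nullT sc (diamond x y) \<and> nullT sc (diamond y x))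
   \<and> (\<forall>x. is_sh x \<and> nullT sc x \<longrightarrow> nullT sc (Pr x) \<and> nullT sc (DeltaT Delta x) \<and> epsT eps x = 0)
   \<and> (\<forall>(x :: 'a list list \<Rightarrow>\<^sub>0 'k) y. is_sh x \<and> is_sh y \<longrightarrow> is_sh (diamond x y))
   \<and> (\<forall>c. is_sh (muT c :: 'a list list \<Rightarrow>\<^sub>0 'k))
   \<and> (\<forall>x. is_sh x \<longrightarrow> is_sh (Pr x) \<and> is_sh2 (DeltaT Delta x))
   \<and> (\<forall>x y z. is_sh x \<and> is_sh y \<and> is_sh z \<longrightarrow>
        teq sc (diamond (diamond x y) z) (diamond x (diamond y z)))
   \<and> (\<forall>x y. is_sh x \<and> is_sh y \<longrightarrow> teq sc (diamond x y) (diamond y x))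
   \<and> (\<forall>c x. is_sh x \<longrightarrow> teq sc (diamond (muT c) x) (smul c x))
   \<and> (\<forall>x y. is_sh x \<and> is_sh y \<longrightarrow>
        teq sc (diamond (Pr x) (Pr y))
               (Pr (diamond (Pr x) y) + Pr (diamond x (Pr y)) - Pr (Pr (diamond x y))))
   \<and> (\<forall>x y. is_sh x \<and> is_sh y \<longrightarrow>
        teq sc (DeltaT Delta (diamond x y)) (bullet (DeltaT Delta x) (DeltaT Delta y)))
   \<and> teq sc (DeltaT Delta (muT 1)) (pt [[1], [1]])
   \<and> (\<forall>x y. is_sh x \<and> is_sh y \<longrightarrow> epsT eps (diamond x y) = epsT eps x * epsT eps y)
   \<and> epsT eps (muT 1 :: 'a list list \<Rightarrow>\<^sub>0 'k) = 1
   \<and> (\<forall>x. is_sh x \<longrightarrow>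
        teq sc (tmap_left (DTw Delta) (DeltaT Delta x)) (tmap_right (DTw Delta) (DeltaT Delta x)))
   \<and> (\<forall>x. is_sh x \<longrightarrow> teq sc (counit_left (epsw eps) (DeltaT Delta x)) x)
   \<and> (\<forall>x. is_sh x \<longrightarrow> teq sc (DeltaT Delta (Pr x)) (id_Pr (DeltaT Delta x)))"
proof (intro conjI allI impI; (elim conjE)?)
  note ka = ka[OF bialg]
  fix x y :: "'a list list \<Rightarrow>\<^sub>0 'k"
  assume "nullT sc x"
  then have "teq sc x 0" by (simp add: null_teq0)
  then show "nullT sc (diamond x y)" "nullT sc (diamond y x)"
    using teq_diamond[OF ka _ teq_refl, of x 0 y] teq_diamond[OF ka teq_refl, of x 0 y]
    by (simp_all add: null_teq0 diamond_lin)
next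
  fix x :: "'a list list \<Rightarrow>\<^sub>0 'k"
  assume "nullT sc x"
  then have x0: "teq sc x 0" by (simp add: null_teq0)
  show "nullT sc (Pr x)" using teq_Pr[OF x0] by (simp add: null_teq0 Pr_lin)
  show "nullT sc (DeltaT Delta x)" using teq_DeltaT[OF bialg x0] by (simp add: null_teq0 DeltaT_lin)
  show "epsT eps x = 0" using epsT_null[OF eadd[OF bialg] esc[OF bialg] \<open>nullT sc x\<close>] .
next
  fix x y :: "'a list list \<Rightarrow>\<^sub>0 'k"
  show "is_sh (diamond x y)" by (rule sh_diamond)
next
  fix c show "is_sh (muT c :: 'a list list \<Rightarrow>\<^sub>0 'k)" by (simp add: muT_def sh_smul sh_pt)
next
  fix x :: "'a list list \<Rightarrow>\<^sub>0 'k"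
  show "is_sh (Pr x)" by (rule sh_Pr)
  show "is_sh2 (DeltaT Delta x)" by (rule sh2_DeltaT[OF bialg])
next
  fix x y z :: "'a list list \<Rightarrow>\<^sub>0 'k"
  assume "is_sh x" "is_sh y" "is_sh z"
  then show "teq sc (diamond (diamond x y) z) (diamond x (diamond y z))" by (simp add: diamond_assoc)
next
  fix x y :: "'a list list \<Rightarrow>\<^sub>0 'k"
  show "teq sc (diamond x y) (diamond y x)" by (simp add: diamond_comm[of x y])
next
  fix c and x :: "'a list list \<Rightarrow>\<^sub>0 'k"
  assume "is_sh x"
  then show "teq sc (diamond (muT c) x) (smul c x)" by (simp add: muT_def diamond_lin unit_left)
next
  fix x y :: "'a list list \<Rightarrow>\<^sub>0 'k"
  assume "is_sh x" "is_sh y"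
  then show "teq sc (diamond (Pr x) (Pr y)) (Pr (diamond (Pr x) y) + Pr (diamond x (Pr y)) - Pr (Pr (diamond x y)))"
    by (simp add: nij NN_def Pr_lin algebra_simps)
next
  fix x y :: "'a list list \<Rightarrow>\<^sub>0 'k"
  assume "is_sh x" "is_sh y"
  then show "teq sc (DeltaT Delta (diamond x y)) (bullet (DeltaT Delta x) (DeltaT Delta y))"
    by (rule DeltaT_hom[OF bialg])
next
  show "teq sc (DeltaT Delta (muT 1)) (pt [[1], [1]])"
    using D1[OF bialg] by (simp add: muT_def)
next
  fix x y :: "'a list list \<Rightarrow>\<^sub>0 'k"
  assume "is_sh x" "is_sh y"
  then show "epsT eps (diamond x y) = epsT eps x * epsT eps y"
    by (rule epsT_diamond[OF emul[OF bialg] e1[OF bialg]])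
next
  show "epsT eps (muT 1 :: 'a list list \<Rightarrow>\<^sub>0 'k) = 1"
    by (simp add: muT_def epsT_lin epsw_def e1[OF bialg])
next
  fix x :: "'a list list \<Rightarrow>\<^sub>0 'k"
  assume "is_sh x"
  then show "teq sc (tmap_left (DTw Delta) (DeltaT Delta x)) (tmap_right (DTw Delta) (DeltaT Delta x))"
    by (rule coassoc_sh[OF bialg])
next
  fix x :: "'a list list \<Rightarrow>\<^sub>0 'k"
  assume "is_sh x"
  then show "teq sc (counit_left (epsw eps) (DeltaT Delta x)) x"
    by (rule counit_sh[OF bialg])
next
  fix x :: "'a list list \<Rightarrow>\<^sub>0 'k"
  assume "is_sh x"
  then show "teq sc (DeltaT Delta (Pr x)) (id_Pr (DeltaT Delta x))"
    by (rule cocycle[OF bialg])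
qed


end
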